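(* Let $\{\mathcal L^{(1)}_t\}_{t\ge0}$ and $\{\mathcal L^{(2)}_t\}_{t\ge0}$ be two families of dynamical generators each of which generates SSC dynamics. Suppose that for every $\alpha,\beta\ge0$ the family $\mathcal L'_t:=\alpha\mathcal L^{(1)}_t+\beta\mathcal L^{(2)}_t$ is commutative, i.e. $[\mathcal L'_s,\mathcal L'_t]=0$ for all $s,t\ge0$. Then $\mathcal L^{(1)}$ and $\mathcal L^{(2)}$ are additive: for every $\alpha,\beta\ge0$ the family $\mathcal L'_t$ generates dynamics $\Lambda'_t=\exp\!\big(\int_0^t\mathcal L'_\tau d\tau\big)$ consisting of completely positive trace-preserving maps for all $t\ge0$ (indeed, SSC dynamics).
   Context: A dynamical generator is a linear, Hermiticity-preserving, trace-annihilating map on $d\times d$ complex matrices. Fix an orthonormal operator basis $\{F_i\}_{i=1}^{d^2}$ with $\mathrm{tr}(F_i^\dagger F_j)=\delta_{ij}$, $F_{d^2}=\mathbb 1/\sqrt d$, other $F_i$ traceless; every generator decomposes uniquely as $\mathcal L[\rho]=-\mathrm i[H,\rho]+\sum_{i,j=1}^{d^2-1}\mathsf D_{ij}(F_i\rho F_j^\dagger-\frac12\{F_j^\dagger F_i,\rho\})$; it is of GKSL form if $\mathsf D\ge0$. A family of generators is physical if the family of maps $\Lambda_t$ solving $\dot\Lambda_t=\mathcal L_t\circ\Lambda_t$, $\Lambda_0=\mathrm{id}$, consists of CPTP maps. A family is commutative if $[\mathcal L_s,\mathcal L_t]=0$ for all $s,t$; then $\Lambda_t=\exp(\mathcal Z_t)$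 with $\mathcal Z_t=\int_0^t\mathcal L_\tau d\tau$. The dynamics is semigroup-simulable (SS) if $\mathcal Z_t$ is of GKSL form for all $t\ge0$; SSC means commutative and SS. Two physical families are additive if all non-negative linear combinations $\alpha\mathcal L^{(1)}_t+\beta\mathcal L^{(2)}_t$, $\alpha,\beta\ge0$, are physical. *)

theory Defs
  imports "HOL-Analysis.Analysis"
begin

text \<open>d x d complex matrices are modelled as complex^'d^'d (d = CARD('d)); superoperators
  (maps on d x d matrices) are functions on this type, a family of generators is
  a function real \<Rightarrow> superoperator, indexed by t \<ge> 0.\<close>

type_synonym 'd cmat = "complex^'d^'d"
type_synonym 'd superop = "'d cmat \<Rightarrow> 'd cmat"

definition adj :: "'d::finite cmat \<Rightarrow> 'd cmat" where
  "adj X = (\<chi> i j. cnj (X $ j $ i))"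

definition csmult :: "complex \<Rightarrow> 'd::finite cmat \<Rightarrow> 'd cmat" where
  "csmult c X = (\<chi> i j. c * X $ i $ j)"

definition complex_linear_map :: "'d::finite superop \<Rightarrow> bool" where
  "complex_linear_map L \<longleftrightarrow>
     (\<forall>X Y. L (X + Y) = L X + L Y) \<and> (\<forall>c X. L (csmult c X) = csmult c (L X))"

definition dyn_gen :: "'d::finite superop \<Rightarrow> bool" where
  "dyn_gen L \<longleftrightarrow> complex_linear_map L \<and> (\<forall>X. L (adj X) = adj (L X)) \<and> (\<forall>X. trace (L X) = 0)"

definition cinner :: "complex^'d \<Rightarrow> complex^'d \<Rightarrow> complex" where
  "cinner u w = (\<Sum>i\<in>UNIV. cnj (u $ i) * w $ i)"

text \<open>A k x k block matrix with blocks in M_d (i.e. an element of M_k \<otimes> M_d) is positive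
  semidefinite.\<close>
definition psd_block :: "nat \<Rightarrow> (nat \<Rightarrow> nat \<Rightarrow> 'd::finite cmat) \<Rightarrow> bool" where
  "psd_block k X \<longleftrightarrow> (\<forall>v :: nat \<Rightarrow> complex^'d.
     (let q = (\<Sum>a<k. \<Sum>b<k. cinner (v a) (X a b *v v b)) in Im q = 0 \<and> 0 \<le> Re q))"

definition completely_positive :: "'d::finite superop \<Rightarrow> bool" where
  "completely_positive \<Lambda> \<longleftrightarrow>
     complex_linear_map \<Lambda> \<and>
     (\<forall>k X. psd_block k X \<longrightarrow> psd_block k (\<lambda>a b. \<Lambda> (X a b)))"

definition trace_preserving :: "'d::finite superop \<Rightarrow> bool" where
  "trace_preserving \<Lambda> \<longleftrightarrow> (\<forall>X. trace (\<Lambda> X) = trace X)"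

definition CPTP :: "'d::finite superop \<Rightarrow> bool" where
  "CPTP \<Lambda> \<longleftrightarrow> completely_positive \<Lambda> \<and> trace_preserving \<Lambda>"

definition op_basis :: "(nat \<Rightarrow> 'd::finite cmat) \<Rightarrow> bool" where
  "op_basis F \<longleftrightarrow>
     (\<forall>i\<in>{1..CARD('d)^2}. \<forall>j\<in>{1..CARD('d)^2}. trace (adj (F i) ** F j) = (if i = j then 1 else 0)) \<and>
     F (CARD('d)^2) = csmult (complex_of_real (1 / sqrt (real CARD('d)))) (mat 1) \<and>
     (\<forall>i\<in>{1..CARD('d)^2 - 1}. trace (F i) = 0)"

definition psd_coeff :: "nat \<Rightarrow> (nat \<Rightarrow> nat \<Rightarrow> complex) \<Rightarrow> bool" where
  "psd_coeff n D \<longleftrightarrow> (\<forall>v :: nat \<Rightarrow> complex.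
     (let q = (\<Sum>i\<in>{1..n}. \<Sum>j\<in>{1..n}. cnj (v i) * D i j * v j) in Im q = 0 \<and> 0 \<le> Re q))"

definition hermitian :: "'d::finite cmat \<Rightarrow> bool" where
  "hermitian H \<longleftrightarrow> adj H = H"

definition lindblad_map :: "(nat \<Rightarrow> 'd::finite cmat) \<Rightarrow> 'd cmat \<Rightarrow> (nat \<Rightarrow> nat \<Rightarrow> complex) \<Rightarrow> 'd superop" where
  "lindblad_map F H D \<rho> =
     csmult (- \<i>) (H ** \<rho> - \<rho> ** H) +
     (\<Sum>i\<in>{1..CARD('d)^2 - 1}. \<Sum>j\<in>{1..CARD('d)^2 - 1}.
        csmult (D i j) (F i ** \<rho> ** adj (F j)
          - csmult (1/2) (adj (F j) ** F i ** \<rho> + \<rho> ** (adj (F j) ** F i))))"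

definition GKSL_form :: "(nat \<Rightarrow> 'd::finite cmat) \<Rightarrow> 'd superop \<Rightarrow> bool" where
  "GKSL_form F L \<longleftrightarrow> (\<exists>H D. hermitian H \<and> psd_coeff (CARD('d)^2 - 1) D \<and> L = lindblad_map F H D)"

text \<open>Z_t = int_0^t L_tau dtau (applied pointwise; the superoperators are linear).\<close>
definition Zint :: "(real \<Rightarrow> 'd::finite superop) \<Rightarrow> real \<Rightarrow> 'd superop" where
  "Zint L t \<rho> = integral {0..t} (\<lambda>\<tau>. L \<tau> \<rho>)"

definition superop_exp :: "'d::finite superop \<Rightarrow> 'd superop" where
  "superop_exp Z \<rho> = (\<Sum>n. (1 / fact n) *\<^sub>R (Z ^^ n) \<rho>)"

definition solves_master :: "(real \<Rightarrow> 'd::finite superop) \<Rightarrow> (real \<Rightarrow> 'd superop) \<Rightarrow> bool" where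
  "solves_master L \<Lambda> \<longleftrightarrow> \<Lambda> 0 = id \<and>
     (\<forall>t\<ge>0. \<forall>\<rho>. ((\<lambda>s. \<Lambda> s \<rho>) has_vector_derivative L t (\<Lambda> t \<rho>)) (at t within {0..}))"

definition physical :: "(real \<Rightarrow> 'd::finite superop) \<Rightarrow> bool" where
  "physical L \<longleftrightarrow> (\<exists>\<Lambda>. solves_master L \<Lambda>) \<and>
     (\<forall>\<Lambda>. solves_master L \<Lambda> \<longrightarrow> (\<forall>t\<ge>0. CPTP (\<Lambda> t)))"

definition commutative_family :: "(real \<Rightarrow> 'd::finite superop) \<Rightarrow> bool" where
  "commutative_family L \<longleftrightarrow> (\<forall>s\<ge>0. \<forall>t\<ge>0. L s \<circ> L t = L t \<circ> L s)"

definition semigroup_simulable :: "(nat \<Rightarrow> 'd::finite cmat) \<Rightarrow> (real \<Rightarrow> 'd superop) \<Rightarrow> bool" where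
  "semigroup_simulable F L \<longleftrightarrow> (\<forall>t\<ge>0. GKSL_form F (Zint L t))"

definition SSC :: "(nat \<Rightarrow> 'd::finite cmat) \<Rightarrow> (real \<Rightarrow> 'd superop) \<Rightarrow> bool" where
  "SSC F L \<longleftrightarrow> commutative_family L \<and> semigroup_simulable F L"

definition lin_comb :: "real \<Rightarrow> (real \<Rightarrow> 'd::finite superop) \<Rightarrow> real \<Rightarrow> (real \<Rightarrow> 'd superop) \<Rightarrow> real \<Rightarrow> 'd superop" where
  "lin_comb \<alpha> L1 \<beta> L2 t \<rho> = \<alpha> *\<^sub>R L1 t \<rho> + \<beta> *\<^sub>R L2 t \<rho>"

definition additive :: "(real \<Rightarrow> 'd::finite superop) \<Rightarrow> (real \<Rightarrow> 'd superop) \<Rightarrow> bool" where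
  "additive L1 L2 \<longleftrightarrow> (\<forall>\<alpha>\<ge>0. \<forall>\<beta>\<ge>0. physical (lin_comb \<alpha> L1 \<beta> L2))"

end

theory Submission
  imports Defs "HOL-Analysis.Analysis"
begin


typedef (overloaded) 'a op = "UNIV :: ('a::euclidean_space \<Rightarrow>\<^sub>L 'a) set"
  morphisms opb Op by auto

setup_lifting type_definition_op

instantiation op :: (euclidean_space) real_normed_algebra_1
begin
lift_definition norm_op :: "'a op \<Rightarrow> real" is norm .
lift_definition minus_op :: "'a op \<Rightarrow> 'a op \<Rightarrow> 'a op" is "(-)" .
lift_definition plus_op :: "'a op \<Rightarrow> 'a op \<Rightarrow> 'a op" is "(+)" .
lift_definition uminus_op :: "'a op \<Rightarrow> 'a op" is "uminus" .
lift_definition zero_op :: "'a op" is "0" .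
lift_definition scaleR_op :: "real \<Rightarrow> 'a op \<Rightarrow> 'a op" is "scaleR" .
lift_definition times_op :: "'a op \<Rightarrow> 'a op \<Rightarrow> 'a op" is "blinfun_compose" .
lift_definition one_op :: "'a op" is "id_blinfun" .
definition dist_op :: "'a op \<Rightarrow> 'a op \<Rightarrow> real"
  where "dist_op a b = norm (a - b)"
definition [code del]:
  "(uniformity :: ('a op \<times> 'a op) filter) = (INF e\<in>{0 <..}. principal {(x, y). dist x y < e})"
definition open_op :: "'a op set \<Rightarrow> bool"
  where [code del]: "open_op S = (\<forall>x\<in>S. \<forall>\<^sub>F (x', y) in uniformity. x' = x \<longrightarrow> y \<in> S)"
definition sgn_op :: "'a op \<Rightarrow> 'a op"
  where "sgn_op x = scaleR (inverse (norm x)) x"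
instance
proof
  fix x y z :: "'a op" and a b :: real
  show "x + y + z = x + (y + z)" by transfer (simp add: algebra_simps)
  show "x + y = y + x" by transfer (simp add: algebra_simps)
  show "0 + x = x" by transfer simp
  show "- x + x = 0" by transfer simp
  show "x - y = x + - y" by transfer simp
  show "a *\<^sub>R (x + y) = a *\<^sub>R x + a *\<^sub>R y" by transfer (simp add: algebra_simps)
  show "(a + b) *\<^sub>R x = a *\<^sub>R x + b *\<^sub>R x" by transfer (simp add: algebra_simps)
  show "a *\<^sub>R b *\<^sub>R x = (a * b) *\<^sub>R x" by transfer simp
  show "1 *\<^sub>R x = x" by transfer simp
  show "dist x y = norm (x - y)" by (simp add: dist_op_def)
  show "sgn x = inverse (norm x) *\<^sub>R x" by (simp add: sgn_op_def)
  show "(norm x = 0) = (x = 0)" by transfer simp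
  show "norm (x + y) \<le> norm x + norm y" by transfer (rule norm_triangle_ineq)
  show "norm (a *\<^sub>R x) = \<bar>a\<bar> * norm x" by transfer simp
  show "x * y * z = x * (y * z)" by transfer (rule blinfun_eqI, simp)
  show "(x + y) * z = x * z + y * z" by transfer (rule blinfun_eqI, simp add: blinfun.bilinear_simps)
  show "x * (y + z) = x * y + x * z" by transfer (rule blinfun_eqI, simp add: blinfun.bilinear_simps)
  show "a *\<^sub>R x * y = a *\<^sub>R (x * y)" by transfer (rule blinfun_eqI, simp add: blinfun.bilinear_simps)
  show "x * a *\<^sub>R y = a *\<^sub>R (x * y)" by transfer (rule blinfun_eqI, simp add: blinfun.bilinear_simps)
  show "1 * x = x" by transfer (rule blinfun_eqI, simp)
  show "x * 1 = x" by transfer (rule blinfun_eqI, simp)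
  show "(0::'a op) \<noteq> 1"
  proof transfer
    obtain v :: 'a where "v \<noteq> 0" using nonzero_Basis SOME_Basis by blast
    then show "(0::'a\<Rightarrow>\<^sub>L'a) \<noteq> id_blinfun" by (metis blinfun.zero_left blinfun_apply_id_blinfun)
  qed
  show "norm (x * y) \<le> norm x * norm y" by transfer (rule norm_blinfun_compose)
  show "norm (1::'a op) = 1" by transfer simp
  show "uniformity = (INF e\<in>{0<..}. principal {(x::'a op, y). dist x y < e})" by (simp add: uniformity_op_def)
  fix U :: "'a op set"
  show "open U = (\<forall>x\<in>U. \<forall>\<^sub>F (x', y) in uniformity. x' = x \<longrightarrow> y \<in> U)" by (simp add: open_op_def)
qed
end


lemma norm_op_opb: "norm x = norm (opb x)" by (simp add: norm_op.rep_eq)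

instance op :: (euclidean_space) banach
proof
  fix X :: "nat \<Rightarrow> 'a op" assume c: "Cauchy X"
  have "Cauchy (\<lambda>n. opb (X n))"
    using c unfolding Cauchy_def dist_norm by (simp add: norm_op.rep_eq minus_op.rep_eq)
  then obtain L where L: "(\<lambda>n. opb (X n)) \<longlonglongrightarrow> L" using Cauchy_convergent convergent_def by blast
  have "X \<longlonglongrightarrow> Op L"
    using L unfolding LIMSEQ_iff dist_norm by (simp add: norm_op.rep_eq minus_op.rep_eq Op_inverse)
  then show "convergent X" by (auto simp: convergent_def)
qed

definition app :: "'a::euclidean_space op \<Rightarrow> 'a \<Rightarrow> 'a" where
  "app x v = blinfun_apply (opb x) v"

definition mkop :: "('a::euclidean_space \<Rightarrow> 'a) \<Rightarrow> 'a op" where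
  "mkop f = Op (Blinfun f)"

lemma app_mkop: "bounded_linear f \<Longrightarrow> app (mkop f) = f"
  by (rule ext) (simp add: app_def mkop_def Op_inverse bounded_linear_Blinfun_apply)

lemma app_mkop_linear: "linear f \<Longrightarrow> app (mkop (f::'a::euclidean_space\<Rightarrow>'a)) = f"
  by (simp add: app_mkop linear_conv_bounded_linear)

lemma app_eqI: "(\<And>v. app x v = app y v) \<Longrightarrow> x = y"
  unfolding app_def by (metis blinfun_eqI opb_inject)

lemma app_mult[simp]: "app (x * y) v = app x (app y v)"
  by (simp add: app_def times_op.rep_eq)
lemma app_one[simp]: "app 1 v = v"
  by (simp add: app_def one_op.rep_eq)
lemma app_zero[simp]: "app 0 v = 0"
  by (simp add: app_def zero_op.rep_eq)
lemma app_add[simp]: "app (x + y) v = app x v + app y v"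
  by (simp add: app_def plus_op.rep_eq blinfun.bilinear_simps)
lemma app_diff[simp]: "app (x - y) v = app x v - app y v"
  by (simp add: app_def minus_op.rep_eq blinfun.bilinear_simps)
lemma app_uminus[simp]: "app (- x) v = - app x v"
  by (simp add: app_def uminus_op.rep_eq blinfun.bilinear_simps)
lemma app_scaleR[simp]: "app (r *\<^sub>R x) v = r *\<^sub>R app x v"
  by (simp add: app_def scaleR_op.rep_eq blinfun.bilinear_simps)
lemma app_norm: "norm (app x v) \<le> norm x * norm v"
  by (simp add: app_def norm_op.rep_eq norm_blinfun)

lemma bounded_bilinear_app: "bounded_bilinear app"
proof
  fix a a' :: "'a op" and b b' :: 'a and r :: real
  show "app (a + a') b = app a b + app a' b" by simp
  show "app a (b + b') = app a b + app a b'" by (simp add: app_def blinfun.bilinear_simps)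
  show "app (r *\<^sub>R a) b = r *\<^sub>R app a b" by simp
  show "app a (r *\<^sub>R b) = r *\<^sub>R app a b" by (simp add: app_def blinfun.bilinear_simps)
  show "\<exists>K. \<forall>a b. norm (app a b) \<le> norm a * norm b * K"
    by (rule exI[of _ 1]) (simp add: app_norm)
qed

interpretation app: bounded_bilinear app by (rule bounded_bilinear_app)

lemma app_power_funpow: "app (A ^ n) v = (app A ^^ n) v"
proof (induction n arbitrary: v)
  case (Suc n)
  have "app (A ^ Suc n) v = app (A ^ n) (app A v)" by (simp only: power_Suc2 app_mult)
  then show ?case using Suc by (simp add: funpow_Suc_right del: funpow.simps)
qed simp

lemma app_exp: "app (exp A) v = (\<Sum>n. (1 / fact n) *\<^sub>R (app A ^^ n) v)"
proof -
  have s: "summable (\<lambda>n. A ^ n /\<^sub>R fact n)" by (rule summable_exp_generic)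
  have "app (exp A) v = app (\<Sum>n. A ^ n /\<^sub>R fact n) v" by (simp add: exp_def)
  also have "\<dots> = (\<Sum>n. app (A ^ n /\<^sub>R fact n) v)"
    using bounded_linear.suminf[OF app.bounded_linear_left s] by simp
  also have "\<dots> = (\<Sum>n. (1 / fact n) *\<^sub>R (app A ^^ n) v)"
    by (simp add: app_power_funpow divide_inverse_commute)
  finally show ?thesis .
qed

lemma mult_exp_commute:
  fixes A B :: "'a::{real_normed_algebra_1,banach}"
  assumes "A * B = B * A"
  shows "B * exp A = exp A * B"
proof -
  have p: "\<And>n. B * A ^ n = A ^ n * B" using assms by (metis power_commuting_commutes)
  have "B * exp A = (\<Sum>n. B * (A ^ n /\<^sub>R fact n))"
    unfolding exp_def by (rule suminf_mult[symmetric, OF summable_exp_generic])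
  also have "\<dots> = (\<Sum>n. (A ^ n /\<^sub>R fact n) * B)"
    by (simp add: p)
  also have "\<dots> = exp A * B"
    unfolding exp_def by (rule suminf_mult2[symmetric, OF summable_exp_generic])
  finally show ?thesis .
qed

lemma exp_nat_mult_gen:
  fixes A :: "'a::{real_normed_algebra_1,banach}"
  shows "exp (of_nat n * A) = exp A ^ n"
proof (induction n)
  case (Suc n)
  have "exp (of_nat (Suc n) * A) = exp (A + of_nat n * A)" by (simp add: algebra_simps)
  also have "\<dots> = exp A * exp (of_nat n * A)"
    by (rule exp_add_commuting) (simp add: mult_of_nat_commute algebra_simps)
  finally show ?case using Suc by simp
qed simp


lemma exp_rem_bound:
  fixes h :: "'a::{real_normed_algebra_1,banach}"
  shows "norm (exp h - 1 - h) \<le> norm h ^ 2 * exp (norm h)"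
proof -
  let ?f = "\<lambda>n. h^n /\<^sub>R fact n"
  have s: "summable ?f" by (rule summable_exp_generic)
  have sn: "summable (\<lambda>n. norm (?f n))" by (rule summable_norm_exp)
  have e: "exp h - 1 - h = (\<Sum>n. ?f (n+2))"
    using suminf_split_initial_segment[OF s, of 2] by (simp add: exp_def eval_nat_numeral)
  have sn2: "summable (\<lambda>n. norm (?f (n+2)))" using sn by (subst summable_iff_shift) 
  have sr: "summable (\<lambda>n. norm h^2 * (norm h ^ n /\<^sub>R fact n))"
    by (rule summable_mult) (rule summable_exp_generic)
  have "norm (\<Sum>n. ?f (n+2)) \<le> (\<Sum>n. norm (?f (n+2)))" by (rule summable_norm[OF sn2])
  also have "\<dots> \<le> (\<Sum>n. norm h^2 * (norm h ^ n /\<^sub>R fact n))"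
  proof (rule suminf_le[OF _ sn2 sr])
    fix n
    have a: "norm (h ^ (n+2)) \<le> norm h ^ (n+2)" by (rule norm_power_ineq)
    have b: "(fact n :: real) \<le> fact (n+2)" by (rule fact_mono) simp
    have c: "(0::real) < fact n" by simp
    have "norm (?f (n+2)) = norm (h ^ (n+2)) / fact (n+2)"
      by (simp only: norm_scaleR abs_inverse abs_of_pos[OF fact_gt_zero] divide_inverse mult.commute)
    also have "\<dots> \<le> norm h ^ (n+2) / fact (n+2)" using a by (simp add: divide_right_mono)
    also have "\<dots> \<le> norm h ^ (n+2) / fact n" using b c by (simp add: frac_le)
    also have "\<dots> = norm h^2 * (norm h ^ n /\<^sub>R fact n)" by (simp add: power_add divide_inverse algebra_simps power2_eq_square)
    finally show "norm (?f (n+2)) \<le> norm h^2 * (norm h ^ n /\<^sub>R fact n)" .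
  qed
  also have "\<dots> = norm h ^ 2 * exp (norm h)"
    unfolding exp_def by (rule suminf_mult[OF summable_exp_generic])
  finally show ?thesis using e by simp
qed

lemma exp_has_derivative_0:
  "(exp has_derivative (\<lambda>x. x)) (at (0::'a::{real_normed_algebra_1,banach}))"
  unfolding has_derivative_within
proof (intro conjI)
  show "bounded_linear (\<lambda>x::'a. x)" by (rule bounded_linear_ident)
  have lim: "((\<lambda>y::'a. norm y * exp (norm y)) \<longlongrightarrow> 0) (at 0)"
    by (rule tendsto_eq_intros | simp)+
  show "((\<lambda>y::'a. (1 / norm (y - 0)) *\<^sub>R (exp y - (exp 0 + (y - 0)))) \<longlongrightarrow> 0) (at 0 within UNIV)"
  proof (rule Lim_null_comparison[where g="\<lambda>y. norm y * exp (norm y)"])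
    show "((\<lambda>y::'a. norm y * exp (norm y)) \<longlongrightarrow> 0) (at 0 within UNIV)" using lim by simp
    show "\<forall>\<^sub>F y::'a in at 0 within UNIV. norm ((1 / norm (y - 0)) *\<^sub>R (exp y - (exp 0 + (y - 0)))) \<le> norm y * exp (norm y)"
    proof -
      have "\<forall>y::'a. y \<noteq> 0 \<longrightarrow> norm ((1 / norm (y - 0)) *\<^sub>R (exp y - (exp 0 + (y - 0)))) \<le> norm y * exp (norm y)"
      proof (intro allI impI)
      fix y :: 'a assume "y \<noteq> 0"
      then have ny: "norm y > 0" by simp
      have "norm ((1 / norm (y - 0)) *\<^sub>R (exp y - (exp 0 + (y - 0)))) = norm (exp y - 1 - y) / norm y"
        by (simp add: divide_inverse_commute diff_diff_eq)
      also have "\<dots> \<le> norm y ^ 2 * exp (norm y) / norm y"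
        using exp_rem_bound[of y] ny by (simp add: divide_right_mono)
      also have "\<dots> = norm y * exp (norm y)" using ny by (simp add: power2_eq_square)
      finally show "norm ((1 / norm (y - 0)) *\<^sub>R (exp y - (exp 0 + (y - 0)))) \<le> norm y * exp (norm y)" .
      qed
      then show ?thesis unfolding eventually_at_filter by (intro always_eventually allI impI) (auto simp del: norm_divide)
    qed
  qed
qed

lemma exp_path_deriv:
  fixes Z :: "real \<Rightarrow> 'a::{real_normed_algebra_1,banach}"
  assumes d: "(Z has_vector_derivative Z') (at t within S)"
    and c: "\<And>s. s \<in> S \<Longrightarrow> Z s * Z t = Z t * Z s" and tS: "t \<in> S"
  shows "((\<lambda>s. exp (Z s)) has_vector_derivative exp (Z t) * Z') (at t within S)"
proof -
  have d1: "((\<lambda>s. Z s - Z t) has_derivative (\<lambda>x. x *\<^sub>R Z')) (at t within S)"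
    using d unfolding has_vector_derivative_def by (auto intro!: derivative_eq_intros)
  have d2: "(exp has_derivative (\<lambda>x. x)) (at ((\<lambda>s. Z s - Z t) t) within ((\<lambda>s. Z s - Z t) ` S))"
    by (simp add: has_derivative_at_withinI exp_has_derivative_0)
  have d3: "((\<lambda>s. exp (Z s - Z t)) has_derivative (\<lambda>x. x *\<^sub>R Z')) (at t within S)"
    using diff_chain_within[OF d1 d2] by (simp add: o_def)
  have d4: "((\<lambda>s. exp (Z t) * exp (Z s - Z t)) has_derivative (\<lambda>x. exp (Z t) * (x *\<^sub>R Z'))) (at t within S)"
    by (rule has_derivative_mult_right[OF d3])
  have eq: "\<And>s. s \<in> S \<Longrightarrow> exp (Z t) * exp (Z s - Z t) = exp (Z s)"
  proof -
    fix s assume "s \<in> S"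
    then have "Z t * (Z s - Z t) = (Z s - Z t) * Z t" using c by (simp add: algebra_simps)
    then have "exp (Z t + (Z s - Z t)) = exp (Z t) * exp (Z s - Z t)" by (rule exp_add_commuting)
    then show "exp (Z t) * exp (Z s - Z t) = exp (Z s)" by simp
  qed
  have d5: "((\<lambda>s. exp (Z s)) has_derivative (\<lambda>x. exp (Z t) * (x *\<^sub>R Z'))) (at t within S)"
    by (rule has_derivative_transform_within[OF d4 zero_less_one tS]) (simp add: eq)
  show ?thesis unfolding has_vector_derivative_def using d5 by (simp add: mult_scaleR_right)
qed


lemma power_diff_bound:
  fixes a b :: "'a::real_normed_algebra_1"
  assumes a: "norm a \<le> M" and b: "norm b \<le> M"
  shows "norm (a^n - b^n) \<le> real n * M^(n-1) * norm (a - b)"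
proof (induction n)
  case 0 then show ?case by simp
next
  case (Suc n)
  have M0: "0 \<le> M" using a norm_ge_zero order_trans by blast
  have "a^Suc n - b^Suc n = a * (a^n - b^n) + (a - b) * b^n" by (simp add: algebra_simps)
  then have "norm (a^Suc n - b^Suc n) \<le> norm (a * (a^n - b^n)) + norm ((a - b) * b^n)"
    by (simp only: norm_triangle_ineq)
  also have "\<dots> \<le> norm a * norm (a^n - b^n) + norm (a - b) * norm (b^n)"
    by (intro add_mono norm_mult_ineq)
  also have "\<dots> \<le> M * (real n * M^(n-1) * norm (a - b)) + norm (a - b) * M^n"
  proof (rule add_mono)
    show "norm a * norm (a^n - b^n) \<le> M * (real n * M^(n-1) * norm (a - b))"
      using Suc a by (simp add: mult_mono M0)
    have "norm (b^n) \<le> M^n" using norm_power_ineq[of b n] power_mono[OF b, of n] by simp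
    then show "norm (a - b) * norm (b^n) \<le> norm (a - b) * M^n" by (simp add: mult_left_mono)
  qed
  also have "\<dots> = real (Suc n) * M^(Suc n - 1) * norm (a - b)"
    by (cases n) (simp_all add: algebra_simps)
  finally show ?case .
qed

lemma approx_exp_limit:
  fixes A :: "nat \<Rightarrow> 'a::{real_normed_algebra_1,banach}"
  assumes C: "0 \<le> C" and bnd: "\<And>n. n \<ge> 1 \<Longrightarrow> norm (A n - (1 + (1 / real n) *\<^sub>R Z)) \<le> C / (real n)^2"
  shows "(\<lambda>n. A n ^ n) \<longlonglongrightarrow> exp Z"
proof -
  define K where "K = norm Z + C"
  define C' where "C' = C + norm Z ^ 2 * exp (norm Z)"
  have K0: "0 \<le> K" using C by (simp add: K_def)
  have ev: "\<forall>\<^sub>F n in sequentially. norm (A n ^ n - exp Z) \<le> exp K * C' / real n"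
    using eventually_ge_at_top[of 1]
  proof (rule eventually_mono)
    fix n :: nat assume n1: "1 \<le> n"
    then have np: "real n > 0" by simp
    define E where "E = exp ((1 / real n) *\<^sub>R Z)"
    have En: "E ^ n = exp Z"
    proof -
      have "(of_nat n::'a) * ((1 / real n) *\<^sub>R Z) = (1 / real n) *\<^sub>R (of_nat n * Z)"
        by (simp add: mult_scaleR_right)
      also have "(of_nat n::'a) * Z = real n *\<^sub>R Z" by (simp add: scaleR_conv_of_real)
      also have "(1 / real n) *\<^sub>R (real n *\<^sub>R Z) = Z" using np by simp
      finally have "(of_nat n::'a) * ((1 / real n) *\<^sub>R Z) = Z" .
      then show ?thesis unfolding E_def using exp_nat_mult_gen[of n "(1 / real n) *\<^sub>R Z"] by simp
    qed
    have nz: "norm ((1 / real n) *\<^sub>R Z) = norm Z / real n" using np by simp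
    have nzle: "norm Z / real n \<le> norm Z" using n1 by (simp add: divide_le_eq mult_le_cancel_left1)
    have d1: "norm (E - (1 + (1 / real n) *\<^sub>R Z)) \<le> (norm Z / real n)^2 * exp (norm Z)"
    proof -
      have "norm (E - (1 + (1 / real n) *\<^sub>R Z)) = norm (exp ((1 / real n) *\<^sub>R Z) - 1 - (1 / real n) *\<^sub>R Z)"
        by (simp add: E_def diff_diff_eq)
      also have "\<dots> \<le> (norm Z / real n)^2 * exp (norm Z / real n)"
        using exp_rem_bound[of "(1 / real n) *\<^sub>R Z"] nz by simp
      also have "\<dots> \<le> (norm Z / real n)^2 * exp (norm Z)"
        using nzle by (simp add: mult_left_mono)
      finally show ?thesis .
    qed
    have dAE: "norm (A n - E) \<le> C' / (real n)^2"
    proof -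
      have "norm (A n - E) \<le> norm (A n - (1 + (1 / real n) *\<^sub>R Z)) + norm (E - (1 + (1 / real n) *\<^sub>R Z))"
        using norm_triangle_ineq4[of "A n - (1 + (1 / real n) *\<^sub>R Z)" "E - (1 + (1 / real n) *\<^sub>R Z)"] by simp
      also have "\<dots> \<le> C / (real n)^2 + (norm Z / real n)^2 * exp (norm Z)"
        using bnd[OF n1] d1 by simp
      also have "\<dots> = C' / (real n)^2" by (simp add: C'_def power_divide add_divide_distrib)
      finally show ?thesis .
    qed
    have MA: "norm (A n) \<le> exp (K / real n)"
    proof -
      have "norm (A n) \<le> norm (1 + (1 / real n) *\<^sub>R Z) + C / (real n)^2"
        using bnd[OF n1] norm_triangle_sub[of "A n" "1 + (1 / real n) *\<^sub>R Z"] by simp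
      also have "\<dots> \<le> 1 + norm Z / real n + C / real n"
      proof (rule add_mono)
        show "norm (1 + (1 / real n) *\<^sub>R Z) \<le> 1 + norm Z / real n"
          using norm_triangle_ineq[of 1 "(1 / real n) *\<^sub>R Z"] nz by simp
        have "(real n) \<le> (real n)^2" using n1 by (simp add: power2_eq_square)
        then show "C / (real n)^2 \<le> C / real n" using C np by (simp add: divide_left_mono)
      qed
      also have "\<dots> = 1 + K / real n" by (simp add: K_def add_divide_distrib)
      also have "\<dots> \<le> exp (K / real n)" by (rule exp_ge_add_one_self)
      finally show ?thesis .
    qed
    have ME: "norm E \<le> exp (K / real n)"
    proof -
      have "norm E \<le> exp (norm Z / real n)" using norm_exp[of "(1 / real n) *\<^sub>R Z"] nz by (simp add: E_def)
      also have "\<dots> \<le> exp (K / real n)" using C np by (simp add: K_def divide_right_mono)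
      finally show ?thesis .
    qed
    have "norm (A n ^ n - exp Z) = norm (A n ^ n - E ^ n)" by (simp add: En)
    also have "\<dots> \<le> real n * exp (K / real n) ^ (n - 1) * norm (A n - E)"
      by (rule power_diff_bound[OF MA ME])
    also have "\<dots> \<le> real n * exp K * (C' / (real n)^2)"
    proof (rule mult_mono)
      have "exp (K / real n) ^ (n - 1) \<le> exp (K / real n) ^ n"
        by (rule power_increasing) (simp_all add: K0)
      also have "\<dots> = exp K" using np by (simp add: exp_of_nat_mult[symmetric])
      finally show "real n * exp (K / real n) ^ (n - 1) \<le> real n * exp K"
        by (rule mult_left_mono) simp
    qed (simp_all add: dAE)
    also have "\<dots> = exp K * C' / real n" using np by (simp add: power2_eq_square)
    finally show "norm (A n ^ n - exp Z) \<le> exp K * C' / real n" .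
  qed
  have "(\<lambda>n. exp K * C' / real n) \<longlonglongrightarrow> 0" by (rule lim_const_over_n)
  then have "(\<lambda>n. A n ^ n - exp Z) \<longlonglongrightarrow> 0" by (rule Lim_null_comparison[OF ev])
  then have "(\<lambda>n. (A n ^ n - exp Z) + exp Z) \<longlonglongrightarrow> 0 + exp Z" by (intro tendsto_add tendsto_const)
  then show ?thesis by simp
qed


definition psdS :: "nat set \<Rightarrow> (nat \<Rightarrow> nat \<Rightarrow> complex) \<Rightarrow> bool" where
  "psdS S D \<longleftrightarrow> (\<forall>v :: nat \<Rightarrow> complex.
     (let q = (\<Sum>i\<in>S. \<Sum>j\<in>S. cnj (v i) * D i j * v j) in Im q = 0 \<and> 0 \<le> Re q))"

definition qf :: "nat set \<Rightarrow> (nat \<Rightarrow> nat \<Rightarrow> complex) \<Rightarrow> (nat \<Rightarrow> complex) \<Rightarrow> complex" where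
  "qf S D v = (\<Sum>i\<in>S. \<Sum>j\<in>S. cnj (v i) * D i j * v j)"

lemma psdS_qf: "psdS S D \<longleftrightarrow> (\<forall>v. Im (qf S D v) = 0 \<and> 0 \<le> Re (qf S D v))"
  by (simp add: psdS_def qf_def Let_def)

lemma qf_support:
  assumes "finite S" "T \<subseteq> S" "\<And>l. l \<in> S - T \<Longrightarrow> v l = 0"
  shows "qf S D v = qf T D v"
proof -
  have "qf S D v = (\<Sum>i\<in>T. \<Sum>j\<in>S. cnj (v i) * D i j * v j)"
    unfolding qf_def by (rule sum.mono_neutral_right) (use assms in auto)
  also have "\<dots> = qf T D v"
    unfolding qf_def
    by (rule sum.cong[OF refl], rule sum.mono_neutral_right) (use assms in auto)
  finally show ?thesis .
qed

lemma qf_two: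
  assumes S: "finite S" "i \<in> S" "j \<in> S" "i \<noteq> j"
  shows "qf S D (\<lambda>l. if l = i then 1 else if l = j then z else 0)
       = D i i + z * D i j + cnj z * D j i + cnj z * z * D j j"
proof -
  have "qf S D (\<lambda>l. if l = i then 1 else if l = j then z else 0) = qf {i, j} D (\<lambda>l. if l = i then 1 else if l = j then z else 0)"
    by (rule qf_support) (use S in auto)
  also have "\<dots> = D i i + z * D i j + cnj z * D j i + cnj z * z * D j j"
    using S by (simp add: qf_def algebra_simps)
  finally show ?thesis .
qed

lemma qf_one:
  assumes S: "finite S" "i \<in> S"
  shows "qf S D (\<lambda>l. if l = i then 1 else 0) = D i i"
proof -
  have "qf S D (\<lambda>l. if l = i then 1 else 0) = qf {i} D (\<lambda>l. if l = i then 1 else 0)"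
    by (rule qf_support) (use S in auto)
  then show ?thesis by (simp add: qf_def)
qed

lemma psdS_diag: assumes "psdS S D" "finite S" "i \<in> S"
  shows "Im (D i i) = 0" "0 \<le> Re (D i i)"
  using assms qf_one[of S i D] unfolding psdS_qf by metis+

lemma psdS_herm:
  assumes P: "psdS S D" and S: "finite S" "i \<in> S" "j \<in> S"
  shows "D j i = cnj (D i j)"
proof (cases "i = j")
  case True
  then show ?thesis using psdS_diag[OF P S(1) S(2)] by (simp add: complex_eq_iff)
next
  case False
  have a: "Im (qf S D (\<lambda>l. if l = i then 1 else if l = j then 1 else 0)) = 0"
    using P unfolding psdS_qf by blast
  have b: "Im (qf S D (\<lambda>l. if l = i then 1 else if l = j then \<i> else 0)) = 0"
    using P unfolding psdS_qf by blast
  have di: "Im (D i i) = 0" "Im (D j j) = 0" using psdS_diag[OF P S(1)] S by auto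
  from a di have a': "Im (D i j) + Im (D j i) = 0" using qf_two[OF S False, of D 1] by simp
  from b di have b': "Re (D i j) - Re (D j i) = 0" using qf_two[OF S False, of D \<i>] by simp
  show ?thesis using a' b' by (simp add: complex_eq_iff)
qed


lemma qf_insert:
  assumes "finite S" "x \<notin> S"
  shows "qf (insert x S) D v = cnj (v x) * D x x * v x + cnj (v x) * (\<Sum>j\<in>S. D x j * v j)
     + (\<Sum>i\<in>S. cnj (v i) * D i x) * v x + qf S D v"
  using assms by (simp add: qf_def sum.distrib sum_distrib_left sum_distrib_right algebra_simps)

lemma qf_cong: "(\<And>i. i \<in> S \<Longrightarrow> v i = w i) \<Longrightarrow> qf S D v = qf S D w"
  unfolding qf_def by (intro sum.cong refl) auto

lemma psdS_zero_row:
  assumes P: "psdS S D" and S: "finite S" "x \<in> S" "j \<in> S" and d: "D x x = 0"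
  shows "D x j = 0"
proof (rule ccontr)
  assume c: "D x j \<noteq> 0"
  then have jx: "j \<noteq> x" using d by auto
  define c where "c = D x j"
  define n where "n = (Re c)^2 + (Im c)^2"
  have n: "n > 0" using c by (simp add: n_def c_def complex_eq_iff sum_power2_gt_zero_iff)
  define t where "t = (Re (D j j) + 1) / (2 * n)"
  define z where "z = - (complex_of_real t * c)"
  have h: "D j x = cnj c" using psdS_herm[OF P S(1) S(2) S(3)] by (simp add: c_def)
  have "0 \<le> Re (qf S D (\<lambda>l. if l = j then 1 else if l = x then z else 0))"
    using P unfolding psdS_qf by blast
  also have "qf S D (\<lambda>l. if l = j then 1 else if l = x then z else 0) = D j j + z * D j x + cnj z * D x j + cnj z * z * D x x"
    by (rule qf_two) (use S jx in auto)
  finally have "0 \<le> Re (D j j) - 2 * t * n"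
    using d h by (simp add: z_def c_def[symmetric] n_def power2_eq_square algebra_simps)
  moreover have "2 * t * n = Re (D j j) + 1" using n by (simp add: t_def)
  ultimately show False by simp
qed

lemma psdS_decomp:
  assumes "finite S" "psdS S D"
  shows "\<exists>W (m::nat). \<forall>i\<in>S. \<forall>j\<in>S. D i j = (\<Sum>k<m. W k i * cnj (W k j))"
  using assms
proof (induction S arbitrary: D rule: finite_induct)
  case empty show ?case by auto
next
  case (insert x S)
  note P = insert.prems
  have fin: "finite (insert x S)" using insert.hyps by simp
  have herm: "\<And>i j. i \<in> insert x S \<Longrightarrow> j \<in> insert x S \<Longrightarrow> D j i = cnj (D i j)"
    using psdS_herm[OF P fin] by blast
  have dI: "Im (D x x) = 0" "0 \<le> Re (D x x)" using psdS_diag[OF P fin] by auto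
  show ?case
  proof (cases "D x x = 0")
    case True
    have zr: "\<And>j. j \<in> S \<Longrightarrow> D x j = 0" using psdS_zero_row[OF P fin] True by blast
    have zc: "\<And>j. j \<in> S \<Longrightarrow> D j x = 0"
    proof -
      fix j assume j: "j \<in> S"
      have "D j x = cnj (D x j)" using herm[of x j] j by simp
      then show "D j x = 0" using zr[OF j] by simp
    qed
    have PS: "psdS S D"
      unfolding psdS_qf
    proof
      fix v
      have "qf (insert x S) D (v(x := 0)) = qf S D (v(x:=0))"
        using insert.hyps by (simp add: qf_insert)
      also have "\<dots> = qf S D v" by (rule qf_cong) (use insert.hyps in auto)
      finally show "Im (qf S D v) = 0 \<and> 0 \<le> Re (qf S D v)" using P unfolding psdS_qf by metis
    qed
    then obtain W and m :: nat where W: "\<forall>i\<in>S. \<forall>j\<in>S. D i j = (\<Sum>k<m. W k i * cnj (W k j))"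
      using insert.IH[OF PS] by blast
    show ?thesis
    proof (intro exI ballI)
      fix i j assume i: "i \<in> insert x S" and j: "j \<in> insert x S"
      show "D i j = (\<Sum>k<m. (\<lambda>k i. if i = x then 0 else W k i) k i * cnj ((\<lambda>k i. if i = x then 0 else W k i) k j))"
        using i j W zr zc True insert.hyps by (cases "i = x"; cases "j = x") auto
    qed
  next
    case False
    define d where "d = D x x"
    have dpos: "Re d > 0" using dI False by (simp add: d_def complex_eq_iff)
    define r where "r = sqrt (Re d)"
    have r: "r > 0" using dpos by (simp add: r_def)
    have dr: "d = complex_of_real r * complex_of_real r"
      using dI dpos by (simp add: d_def r_def complex_eq_iff flip: of_real_mult)
    have cd: "cnj d = d" using dr by simp
    have d0: "d \<noteq> 0" using dpos by auto
    define D' where "D' = (\<lambda>i j. D i j - D i x * D x j / d)"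
    have PS: "psdS S D'"
      unfolding psdS_qf
    proof
      fix v
      define s where "s = (\<Sum>j\<in>S. D x j * v j)"
      define a where "a = - s / d"
      have cs: "(\<Sum>i\<in>S. cnj (v i) * D i x) = cnj s"
      proof -
        have hx: "\<And>j. j \<in> S \<Longrightarrow> D j x = cnj (D x j)" using herm[of x] by simp
        show ?thesis unfolding s_def cnj_sum by (rule sum.cong) (simp_all add: hx mult.commute)
      qed
      have q1: "qf (insert x S) D (v(x := a)) = cnj a * d * a + cnj a * s + cnj s * a + qf S D v"
      proof -
        have "qf S D (v(x := a)) = qf S D v" by (rule qf_cong) (use insert.hyps in auto)
        moreover have "(\<Sum>j\<in>S. D x j * (v(x := a)) j) = s" unfolding s_def
          by (rule sum.cong) (use insert.hyps in auto)
        moreover have "(\<Sum>i\<in>S. cnj ((v(x := a)) i) * D i x) = cnj s" unfolding cs[symmetric]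
          by (rule sum.cong) (use insert.hyps in auto)
        ultimately show ?thesis using insert.hyps by (simp add: qf_insert d_def)
      qed
      have q2: "qf S D' v = qf S D v - cnj s * s / d"
      proof -
        have "qf S D' v = (\<Sum>i\<in>S. \<Sum>j\<in>S. cnj (v i) * D i j * v j - cnj (v i) * D i x * (D x j * v j) / d)"
          unfolding qf_def D'_def by (rule sum.cong[OF refl], rule sum.cong[OF refl]) (simp add: algebra_simps diff_divide_distrib)
        also have "\<dots> = qf S D v - (\<Sum>i\<in>S. \<Sum>j\<in>S. cnj (v i) * D i x * (D x j * v j) / d)"
          by (simp add: qf_def sum_subtractf)
        also have "(\<Sum>i\<in>S. \<Sum>j\<in>S. cnj (v i) * D i x * (D x j * v j) / d) = (\<Sum>i\<in>S. cnj (v i) * D i x) * s / d"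
          by (simp add: s_def sum_product sum_divide_distrib mult.assoc)
        finally show ?thesis by (simp add: cs)
      qed
      have "cnj a * d * a + cnj a * s + cnj s * a = - (cnj s * s / d)"
        using d0 cd by (simp add: a_def field_simps)
      then have "qf S D' v = qf (insert x S) D (v(x := a))" using q1 q2 by simp
      then show "Im (qf S D' v) = 0 \<and> 0 \<le> Re (qf S D' v)" using P unfolding psdS_qf by metis
    qed
    then obtain W and m :: nat where W: "\<forall>i\<in>S. \<forall>j\<in>S. D' i j = (\<Sum>k<m. W k i * cnj (W k j))"
      using insert.IH[OF PS] by blast
    define W' where "W' = (\<lambda>k i. if k = 0 then D i x / complex_of_real r else if i = x then 0 else W (k - 1) i)"
    show ?thesis
    proof (intro exI ballI)
      fix i j assume i: "i \<in> insert x S" and j: "j \<in> insert x S"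
      have split: "(\<Sum>k<Suc m. W' k i * cnj (W' k j)) = W' 0 i * cnj (W' 0 j) + (\<Sum>k<m. W' (Suc k) i * cnj (W' (Suc k) j))"
        by (rule sum.lessThan_Suc_shift)
      have xS: "x \<notin> S" using insert.hyps by simp
      have rr: "complex_of_real r \<noteq> 0" using r by simp
      show "D i j = (\<Sum>k<Suc m. W' k i * cnj (W' k j))"
      proof (cases "i = x")
        case True
        note ix = True
        show ?thesis
        proof (cases "j = x")
          case True
          then show ?thesis using ix split rr by (simp add: W'_def d_def[symmetric] dr)
        next
          case False
          then have jS: "j \<in> S" using j by simp
          have "D x j = cnj (D j x)" using herm[OF j, of x] by simp
          then show ?thesis using ix False split rr by (simp add: W'_def d_def[symmetric] dr)
        qed
      next
        case False
        then have iS: "i \<in> S" using i by simp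
        show ?thesis
        proof (cases "j = x")
          case True
          then show ?thesis using False split rr by (simp add: W'_def d_def[symmetric] dr)
        next
          case jx: False
          then have jS: "j \<in> S" using j by simp
          have "D i j = D' i j + D i x * D x j / d" by (simp add: D'_def)
          also have "D x j = cnj (D j x)" using herm[OF j, of x] by simp
          finally have "D i j = D' i j + D i x * cnj (D j x) / d" .
          then show ?thesis using False jx split rr W iS jS xS
            by (simp add: W'_def dr)
        qed
      qed
    qed
  qed
qed


lemma csmult_of_real: "csmult (complex_of_real r) X = r *\<^sub>R X"
  by (simp add: csmult_def vec_eq_iff) (simp add: scaleR_conv_of_real)

lemma csmult_add_right: "csmult c (X + Y) = csmult c X + csmult c Y"
  by (simp add: csmult_def vec_eq_iff algebra_simps)
lemma csmult_diff_right: "csmult c (X - Y) = csmult c X - csmult c Y"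
  by (simp add: csmult_def vec_eq_iff algebra_simps)
lemma csmult_add_left: "csmult (a + b) X = csmult a X + csmult b X"
  by (simp add: csmult_def vec_eq_iff algebra_simps)
lemma csmult_csmult: "csmult a (csmult b X) = csmult (a * b) X"
  by (simp add: csmult_def vec_eq_iff algebra_simps)
lemma csmult_one[simp]: "csmult 1 X = X"
  by (simp add: csmult_def vec_eq_iff)
lemma csmult_zero_left[simp]: "csmult 0 X = 0"
  by (simp add: csmult_def vec_eq_iff)
lemma csmult_zero_right[simp]: "csmult c 0 = 0"
  by (simp add: csmult_def vec_eq_iff)
lemma csmult_sum: "csmult c (sum f S) = (\<Sum>i\<in>S. csmult c (f i))"
  by (induction S rule: infinite_finite_induct) (simp_all add: csmult_add_right)
lemma csmult_sum_left: "csmult (sum f S) X = (\<Sum>i\<in>S. csmult (f i) X)"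
  by (induction S rule: infinite_finite_induct) (simp_all add: csmult_add_left)
lemma csmult_scaleR: "csmult c (r *\<^sub>R X) = r *\<^sub>R csmult c X"
  by (simp add: csmult_def vec_eq_iff algebra_simps scaleR_conv_of_real)
lemma csmult_minus: "csmult c (- X) = - csmult c X"
  by (simp add: csmult_def vec_eq_iff)

lemma mm_add_left: "(A + B) ** C = A ** C + B ** (C::'a::semiring_1^'n^'n)"
  by (simp add: matrix_matrix_mult_def vec_eq_iff distrib_right sum.distrib)
lemma mm_add_right: "C ** (A + B) = C ** A + C ** (B::'a::semiring_1^'n^'n)"
  by (simp add: matrix_matrix_mult_def vec_eq_iff distrib_left sum.distrib)
lemma mm_diff_left: "(A - B) ** C = A ** C - B ** (C::'a::ring_1^'n^'n)"
  by (simp add: matrix_matrix_mult_def vec_eq_iff left_diff_distrib sum_subtractf)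
lemma mm_diff_right: "C ** (A - B) = C ** A - C ** (B::'a::ring_1^'n^'n)"
  by (simp add: matrix_matrix_mult_def vec_eq_iff right_diff_distrib sum_subtractf)
lemma mm_sum_left: "(sum f S :: 'd::finite cmat) ** (C::'d cmat) = (\<Sum>i\<in>S. f i ** C)"
  by (induction S rule: infinite_finite_induct) (simp_all add: mm_add_left)
lemma mm_sum_right: "(C::'d::finite cmat) ** (sum f S :: 'd cmat) = (\<Sum>i\<in>S. C ** f i)"
  by (induction S rule: infinite_finite_induct) (simp_all add: mm_add_right)
lemma mm_csmult_left: "csmult c A ** B = csmult c (A ** (B::'d::finite cmat))"
  by (simp add: matrix_matrix_mult_def csmult_def vec_eq_iff sum_distrib_left mult.assoc)
lemma mm_csmult_right: "A ** csmult c B = csmult c (A ** (B::'d::finite cmat))"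
  by (simp add: matrix_matrix_mult_def csmult_def vec_eq_iff sum_distrib_left mult.left_commute)
lemma mm_scaleR_left: "(r *\<^sub>R A) ** B = r *\<^sub>R (A ** (B::'d::finite cmat))"
  by (rule scalar_matrix_assoc[symmetric])
lemma mm_scaleR_right: "A ** (r *\<^sub>R B) = r *\<^sub>R (A ** (B::'d::finite cmat))"
  by (simp add: matrix_scalar_ac scalar_matrix_assoc)
lemma mm_minus_left: "(- A) ** B = - (A ** (B::'d::finite cmat))"
  by (simp add: matrix_matrix_mult_def vec_eq_iff sum_negf)
lemma mm_minus_right: "A ** (- B) = - (A ** (B::'d::finite cmat))"
  by (simp add: matrix_matrix_mult_def vec_eq_iff sum_negf)

lemma adj_adj[simp]: "adj (adj X) = X" by (simp add: adj_def vec_eq_iff)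
lemma adj_add: "adj (X + Y) = adj X + adj Y" by (simp add: adj_def vec_eq_iff)
lemma adj_diff: "adj (X - Y) = adj X - adj Y" by (simp add: adj_def vec_eq_iff)
lemma adj_csmult: "adj (csmult c X) = csmult (cnj c) (adj X)" by (simp add: adj_def csmult_def vec_eq_iff)
lemma adj_scaleR: "adj (r *\<^sub>R X) = r *\<^sub>R adj X" by (simp add: adj_def vec_eq_iff)
lemma adj_zero0: "adj (0::'d::finite cmat) = 0" by (simp add: adj_def vec_eq_iff)
lemma adj_sum: "adj (sum f S) = (\<Sum>i\<in>S. adj (f i))"
  by (induction S rule: infinite_finite_induct) (simp_all add: adj_add adj_zero0)
lemma adj_mm: "adj (X ** Y) = adj Y ** adj (X::'d::finite cmat)"
  by (simp add: adj_def matrix_matrix_mult_def vec_eq_iff mult.commute)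
lemma adj_mat1[simp]: "adj (mat 1 :: 'd::finite cmat) = mat 1"
  by (simp add: adj_def mat_def vec_eq_iff)
lemma adj_zero[simp]: "adj (0::'d::finite cmat) = 0" by (simp add: adj_def vec_eq_iff)

lemma cinner_adj: "cinner u ((A::'d::finite cmat) *v w) = cinner (adj A *v u) w"
proof -
  have "cinner u (A *v w) = (\<Sum>i\<in>UNIV. \<Sum>j\<in>UNIV. cnj (u$i) * (A$i$j * w$j))"
    by (simp add: cinner_def matrix_vector_mult_def sum_distrib_left)
  also have "\<dots> = (\<Sum>j\<in>UNIV. \<Sum>i\<in>UNIV. cnj (u$i) * (A$i$j * w$j))" by (rule sum.swap)
  also have "\<dots> = cinner (adj A *v u) w"
    by (simp add: cinner_def matrix_vector_mult_def adj_def cnj_sum sum_distrib_right sum_distrib_left mult_ac)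
  finally show ?thesis .
qed
lemma cinner_add_right: "cinner u (a + b) = cinner u a + cinner u b"
  by (simp add: cinner_def algebra_simps sum.distrib)
lemma cinner_scaleR_right: "cinner u (r *\<^sub>R a) = complex_of_real r * cinner u a"
  by (simp add: cinner_def sum_distrib_left) (simp add: scaleR_conv_of_real mult.left_commute)

lemma trace_scaleR: "trace (r *\<^sub>R (X::'d::finite cmat)) = r *\<^sub>R trace X"
  by (simp add: trace_def scaleR_sum_right)
lemma trace_csmult: "trace (csmult c (X::'d::finite cmat)) = c * trace X"
  by (simp add: trace_def csmult_def sum_distrib_left)
lemma trace_zero0: "trace (0::'d::finite cmat) = 0" by (simp add: trace_def)
lemma trace_sum: "trace (sum f S :: 'd::finite cmat) = (\<Sum>i\<in>S. trace (f i))"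
  by (induction S rule: infinite_finite_induct) (simp_all add: trace_add trace_zero0)
lemma linear_trace: "linear (trace :: 'd::finite cmat \<Rightarrow> complex)"
  by (rule linearI) (simp_all add: trace_add trace_scaleR)

lemma complex_linear_imp_linear:
  assumes "complex_linear_map (f :: 'd::finite superop)"
  shows "linear f"
proof (rule linearI)
  fix x y :: "'d cmat" and r :: real
  show "f (x + y) = f x + f y" using assms by (simp add: complex_linear_map_def)
  show "f (r *\<^sub>R x) = r *\<^sub>R f x" using assms unfolding complex_linear_map_def
    by (metis csmult_of_real)
qed


definition bq :: "nat \<Rightarrow> (nat \<Rightarrow> nat \<Rightarrow> 'd::finite cmat) \<Rightarrow> (nat \<Rightarrow> complex^'d) \<Rightarrow> complex" where
  "bq k X v = (\<Sum>a<k. \<Sum>b<k. cinner (v a) (X a b *v v b))"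

lemma psd_block_bq: "psd_block k X \<longleftrightarrow> (\<forall>v. Im (bq k X v) = 0 \<and> 0 \<le> Re (bq k X v))"
  by (simp add: psd_block_def bq_def Let_def)

lemma cinner_zero_right[simp]: "cinner u 0 = 0" by (simp add: cinner_def)

lemma mv_scaleR_left: "((r *\<^sub>R X) :: 'd::finite cmat) *v w = r *\<^sub>R (X *v w)"
  by (simp add: matrix_vector_mult_def vec_eq_iff scaleR_sum_right)

lemma bq_add: "bq k (\<lambda>a b. X a b + Y a b) v = bq k X v + bq k Y v"
  by (simp add: bq_def matrix_vector_mult_add_rdistrib cinner_add_right sum.distrib)

lemma bq_scaleR: "bq k (\<lambda>a b. r *\<^sub>R X a b) v = complex_of_real r * bq k X v"
  by (simp add: bq_def mv_scaleR_left cinner_scaleR_right sum_distrib_left)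

lemma bq_conj: "bq k (\<lambda>a b. B ** X a b ** adj B) v = bq k X (\<lambda>a. adj B *v v a)"
  unfolding bq_def
  by (intro sum.cong refl) (simp add: cinner_adj matrix_vector_mul_assoc[symmetric])

lemma complex_linear_map_iff:
  "complex_linear_map f \<longleftrightarrow> (\<forall>X Y. f (X + Y) = f X + f Y) \<and> (\<forall>c X. f (csmult c X) = csmult c (f X))"
  by (simp add: complex_linear_map_def)

lemma cp_zero: "completely_positive (\<lambda>X::'d::finite cmat. 0)"
  by (simp add: completely_positive_def complex_linear_map_def psd_block_bq bq_def)

lemma cp_id: "completely_positive (\<lambda>X::'d::finite cmat. X)"
  by (simp add: completely_positive_def complex_linear_map_def)

lemma cp_add:
  assumes "completely_positive f" "completely_positive g"
  shows "completely_positive (\<lambda>X. f X + g X)"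
  using assms unfolding completely_positive_def complex_linear_map_def psd_block_bq
  by (simp add: bq_add csmult_add_right)

lemma cp_scale:
  assumes "completely_positive f" "0 \<le> r"
  shows "completely_positive (\<lambda>X. r *\<^sub>R f X)"
  using assms unfolding completely_positive_def complex_linear_map_def psd_block_bq
  by (simp add: bq_scaleR csmult_scaleR scaleR_right_distrib)

lemma cp_comp:
  assumes "completely_positive f" "completely_positive g"
  shows "completely_positive (\<lambda>X. f (g X))"
  using assms unfolding completely_positive_def complex_linear_map_def by simp

lemma cp_conj: "completely_positive (\<lambda>X::'d::finite cmat. B ** X ** adj B)"
  unfolding completely_positive_def complex_linear_map_def psd_block_bq
  by (simp add: bq_conj mm_add_right mm_add_left mm_csmult_left mm_csmult_right)

lemma cp_sum:
  fixes m :: nat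
  assumes "\<And>k. k < m \<Longrightarrow> completely_positive (f k)"
  shows "completely_positive (\<lambda>X. \<Sum>k<m. f k X)"
  using assms
proof (induction m)
  case 0 then show ?case using cp_zero by simp
next
  case (Suc m)
  have "completely_positive (\<lambda>X. (\<Sum>k<m. f k X) + f m X)"
    by (rule cp_add) (use Suc in auto)
  then show ?case by simp
qed

lemma bounded_linear_cinner_mv: "bounded_linear (\<lambda>M::'d::finite cmat. cinner u (M *v w))"
  unfolding linear_conv_bounded_linear[symmetric]
  by (rule linearI) (simp add: matrix_vector_mult_add_rdistrib cinner_add_right, simp add: mv_scaleR_left
       cinner_scaleR_right, simp add: scaleR_conv_of_real)

lemma bounded_linear_csmult: "bounded_linear (csmult c :: 'd::finite cmat \<Rightarrow> 'd cmat)"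
  unfolding linear_conv_bounded_linear[symmetric]
  by (rule linearI) (simp_all add: csmult_add_right csmult_scaleR)

lemma cp_limit:
  fixes f :: "nat \<Rightarrow> 'd::finite superop"
  assumes cp: "\<And>n. completely_positive (f n)" and lim: "\<And>X. (\<lambda>n. f n X) \<longlonglongrightarrow> g X"
  shows "completely_positive g"
  unfolding completely_positive_def complex_linear_map_def
proof (intro conjI allI impI)
  fix X Y :: "'d cmat"
  have "(\<lambda>n. f n (X + Y)) \<longlonglongrightarrow> g X + g Y"
    using tendsto_add[OF lim[of X] lim[of Y]] cp by (simp add: completely_positive_def complex_linear_map_def)
  then show "g (X + Y) = g X + g Y" using lim[of "X + Y"] LIMSEQ_unique by blast
next
  fix c and X :: "'d cmat"
  have "(\<lambda>n. f n (csmult c X)) \<longlonglongrightarrow> csmult c (g X)"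
    using bounded_linear.tendsto[OF bounded_linear_csmult lim[of X]] cp
    by (simp add: completely_positive_def complex_linear_map_def)
  then show "g (csmult c X) = csmult c (g X)" using lim[of "csmult c X"] LIMSEQ_unique by blast
next
  fix k and X :: "nat \<Rightarrow> nat \<Rightarrow> 'd cmat"
  assume P: "psd_block k X"
  show "psd_block k (\<lambda>a b. g (X a b))"
    unfolding psd_block_bq
  proof
    fix v
    have t: "(\<lambda>n. bq k (\<lambda>a b. f n (X a b)) v) \<longlonglongrightarrow> bq k (\<lambda>a b. g (X a b)) v"
      unfolding bq_def
      by (intro tendsto_sum bounded_linear.tendsto[OF bounded_linear_cinner_mv] lim)
    have ev: "\<And>n. Im (bq k (\<lambda>a b. f n (X a b)) v) = 0 \<and> 0 \<le> Re (bq k (\<lambda>a b. f n (X a b)) v)"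
      using cp P unfolding completely_positive_def psd_block_bq by blast
    have "(\<lambda>n. Im (bq k (\<lambda>a b. f n (X a b)) v)) \<longlonglongrightarrow> Im (bq k (\<lambda>a b. g (X a b)) v)"
      by (rule tendsto_Im[OF t])
    then have "Im (bq k (\<lambda>a b. g (X a b)) v) = 0" using ev
      by (simp add: LIMSEQ_const_iff)
    moreover have "0 \<le> Re (bq k (\<lambda>a b. g (X a b)) v)"
      by (rule LIMSEQ_le_const[OF tendsto_Re[OF t]]) (use ev in auto)
    ultimately show "Im (bq k (\<lambda>a b. g (X a b)) v) = 0 \<and> 0 \<le> Re (bq k (\<lambda>a b. g (X a b)) v)" by simp
  qed
qed


definition Phi :: "(nat \<Rightarrow> 'd::finite cmat) \<Rightarrow> (nat \<Rightarrow> nat \<Rightarrow> complex) \<Rightarrow> 'd superop" where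
  "Phi F D \<rho> = (\<Sum>i\<in>{1..CARD('d)^2 - 1}. \<Sum>j\<in>{1..CARD('d)^2 - 1}. csmult (D i j) (F i ** \<rho> ** adj (F j)))"

definition Mm :: "(nat \<Rightarrow> 'd::finite cmat) \<Rightarrow> (nat \<Rightarrow> nat \<Rightarrow> complex) \<Rightarrow> 'd cmat" where
  "Mm F D = (\<Sum>i\<in>{1..CARD('d)^2 - 1}. \<Sum>j\<in>{1..CARD('d)^2 - 1}. csmult (D i j) (adj (F j) ** F i))"

definition Kop :: "(nat \<Rightarrow> 'd::finite cmat) \<Rightarrow> 'd cmat \<Rightarrow> (nat \<Rightarrow> nat \<Rightarrow> complex) \<Rightarrow> 'd cmat" where
  "Kop F H D = csmult (- \<i>) H - csmult (1/2) (Mm F D)"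

definition Kad :: "(nat \<Rightarrow> 'd::finite cmat) \<Rightarrow> 'd cmat \<Rightarrow> (nat \<Rightarrow> nat \<Rightarrow> complex) \<Rightarrow> 'd cmat" where
  "Kad F H D = csmult \<i> H - csmult (1/2) (Mm F D)"

lemma csmult_neg_left: "csmult (- c) X = - csmult c X"
  by (simp add: csmult_def vec_eq_iff)

lemma lindblad_decomp:
  fixes F :: "nat \<Rightarrow> 'd::finite cmat"
  shows "lindblad_map F H D \<rho> = Phi F D \<rho> + Kop F H D ** \<rho> + \<rho> ** Kad F H D"
proof -
  let ?I = "{1..CARD('d)^2 - 1}"
  have s: "(\<Sum>i\<in>?I. \<Sum>j\<in>?I. csmult (D i j) (F i ** \<rho> ** adj (F j)
          - csmult (1/2) (adj (F j) ** F i ** \<rho> + \<rho> ** (adj (F j) ** F i))))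
        = Phi F D \<rho> - csmult (1/2) (Mm F D) ** \<rho> - \<rho> ** csmult (1/2) (Mm F D)"
    by (simp add: Phi_def Mm_def csmult_diff_right csmult_add_right csmult_csmult sum_subtractf
        sum.distrib mm_sum_left mm_sum_right mm_csmult_left mm_csmult_right csmult_sum algebra_simps)
  show ?thesis
    unfolding lindblad_map_def s Kop_def Kad_def
    by (simp add: csmult_diff_right mm_diff_left mm_diff_right mm_csmult_left mm_csmult_right
        algebra_simps csmult_minus csmult_neg_left mm_minus_left mm_minus_right)
qed


lemma psd_coeff_psdS: "psd_coeff n D = psdS {1..n} D"
  by (simp add: psd_coeff_def psdS_def)

lemma adj_Mm:
  fixes F :: "nat \<Rightarrow> 'd::finite cmat"
  assumes P: "psd_coeff (CARD('d)^2 - 1) D"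
  shows "adj (Mm F D) = Mm F D"
proof -
  let ?I = "{1..CARD('d)^2 - 1}"
  have PS: "psdS ?I D" using P by (simp add: psd_coeff_psdS)
  have h: "\<And>i j. i \<in> ?I \<Longrightarrow> j \<in> ?I \<Longrightarrow> cnj (D i j) = D j i"
  proof -
    fix i j assume i: "i \<in> ?I" and j: "j \<in> ?I"
    show "cnj (D i j) = D j i" using psdS_herm[OF PS finite_atLeastAtMost i j] by simp
  qed
  have "adj (Mm F D) = (\<Sum>i\<in>?I. \<Sum>j\<in>?I. csmult (cnj (D i j)) (adj (F i) ** F j))"
    by (simp add: Mm_def adj_sum adj_csmult adj_mm)
  also have "\<dots> = (\<Sum>i\<in>?I. \<Sum>j\<in>?I. csmult (D j i) (adj (F i) ** F j))"
    by (intro sum.cong refl) (simp add: h)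
  also have "\<dots> = (\<Sum>j\<in>?I. \<Sum>i\<in>?I. csmult (D j i) (adj (F i) ** F j))"
    by (rule sum.swap)
  also have "\<dots> = Mm F D" by (simp add: Mm_def)
  finally show ?thesis .
qed

lemma adj_Kop:
  fixes F :: "nat \<Rightarrow> 'd::finite cmat"
  assumes P: "psd_coeff (CARD('d)^2 - 1) D" and H: "hermitian H"
  shows "adj (Kop F H D) = Kad F H D"
  using adj_Mm[OF P] H by (simp add: Kop_def Kad_def adj_diff adj_csmult hermitian_def)

lemma conj_expand:
  fixes F :: "nat \<Rightarrow> 'd::finite cmat"
  shows "(\<Sum>i\<in>S. csmult (w i) (F i)) ** \<rho> ** adj (\<Sum>j\<in>S. csmult (w j) (F j))
       = (\<Sum>i\<in>S. \<Sum>j\<in>S. csmult (w i * cnj (w j)) (F i ** \<rho> ** adj (F j)))"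
  by (simp add: adj_sum adj_csmult mm_sum_left mm_sum_right mm_csmult_left mm_csmult_right
      csmult_csmult csmult_sum matrix_mul_assoc mult.commute) (rule sum.swap)

lemma cp_Phi:
  fixes F :: "nat \<Rightarrow> 'd::finite cmat"
  assumes P: "psd_coeff (CARD('d)^2 - 1) D"
  shows "completely_positive (Phi F D)"
proof -
  let ?I = "{1..CARD('d)^2 - 1}"
  obtain W and m :: nat where W: "\<forall>i\<in>?I. \<forall>j\<in>?I. D i j = (\<Sum>k<m. W k i * cnj (W k j))"
    using psdS_decomp[of ?I D] P by (auto simp: psd_coeff_psdS)
  define B where "B k = (\<Sum>i\<in>?I. csmult (W k i) (F i))" for k
  have eq: "Phi F D = (\<lambda>\<rho>. \<Sum>k<m. B k ** \<rho> ** adj (B k))"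
  proof
    fix \<rho>
    have "(\<Sum>k<m. B k ** \<rho> ** adj (B k)) = (\<Sum>k<m. \<Sum>i\<in>?I. \<Sum>j\<in>?I. csmult (W k i * cnj (W k j)) (F i ** \<rho> ** adj (F j)))"
      unfolding B_def by (simp only: conj_expand)
    also have "\<dots> = (\<Sum>i\<in>?I. \<Sum>k<m. \<Sum>j\<in>?I. csmult (W k i * cnj (W k j)) (F i ** \<rho> ** adj (F j)))"
      by (rule sum.swap)
    also have "\<dots> = (\<Sum>i\<in>?I. \<Sum>j\<in>?I. \<Sum>k<m. csmult (W k i * cnj (W k j)) (F i ** \<rho> ** adj (F j)))"
      by (intro sum.cong refl sum.swap)
    also have "\<dots> = (\<Sum>i\<in>?I. \<Sum>j\<in>?I. csmult (D i j) (F i ** \<rho> ** adj (F j)))"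
      by (intro sum.cong refl) (simp add: W csmult_sum_left)
    finally show "Phi F D \<rho> = (\<Sum>k<m. B k ** \<rho> ** adj (B k))" by (simp add: Phi_def)
  qed
  show ?thesis unfolding eq by (rule cp_sum) (rule cp_conj)
qed

lemma cp_linear: "completely_positive f \<Longrightarrow> linear f"
  by (simp add: completely_positive_def complex_linear_imp_linear)

lemma linear_lindblad:
  fixes F :: "nat \<Rightarrow> 'd::finite cmat"
  assumes P: "psd_coeff (CARD('d)^2 - 1) D"
  shows "linear (lindblad_map F H D)"
proof -
  have l: "linear (Phi F D)" by (rule cp_linear[OF cp_Phi[OF P]])
  show ?thesis unfolding lindblad_decomp[abs_def]
    using l unfolding linear_iff
    by (simp add: mm_add_left mm_add_right mm_scaleR_left mm_scaleR_right algebra_simps)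
qed


lemma cp_funpow: "completely_positive f \<Longrightarrow> completely_positive (f ^^ n)"
proof (induction n)
  case 0 then show ?case using cp_id by (simp add: id_def)
next
  case (Suc n)
  have "completely_positive (\<lambda>X. f ((f ^^ n) X))" by (rule cp_comp) (use Suc in auto)
  then show ?case by (simp add: comp_def)
qed

lemma exp_lindblad_cp:
  fixes F :: "nat \<Rightarrow> 'd::finite cmat"
  assumes P: "psd_coeff (CARD('d)^2 - 1) D" and H: "hermitian H"
  shows "completely_positive (app (exp (mkop (lindblad_map F H D))))"
proof -
  define Z where "Z = mkop (lindblad_map F H D)"
  define K where "K = Kop F H D"
  have Kad: "adj K = Kad F H D" unfolding K_def by (rule adj_Kop[OF P H])
  have appZ: "app Z = lindblad_map F H D"
    unfolding Z_def by (rule app_mkop_linear[OF linear_lindblad[OF P]])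
  define cK where "cK = mkop (\<lambda>\<rho>. K ** \<rho> ** adj K)"
  have appcK: "app cK = (\<lambda>\<rho>. K ** \<rho> ** adj K)"
    unfolding cK_def by (rule app_mkop_linear[OF cp_linear[OF cp_conj]])
  define B where "B n = mat 1 + (1 / real n) *\<^sub>R K" for n
  define f where "f n = (\<lambda>\<rho>. B n ** \<rho> ** adj (B n) + (1 / real n) *\<^sub>R Phi F D \<rho>)" for n
  have cpf: "completely_positive (f n)" for n
    unfolding f_def by (intro cp_add cp_conj cp_scale cp_Phi[OF P]) simp
  define A where "A n = mkop (f n)" for n
  have appA: "app (A n) = f n" for n
    unfolding A_def by (rule app_mkop_linear[OF cp_linear[OF cpf]])
  have Aeq: "A n = 1 + (1 / real n) *\<^sub>R Z + (1 / real n)^2 *\<^sub>R cK" for n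
  proof (rule app_eqI)
    fix \<rho>
    let ?c = "1 / real n"
    have adjB: "adj (B n) = mat 1 + ?c *\<^sub>R adj K" by (simp add: B_def adj_add adj_scaleR)
    have "B n ** \<rho> ** adj (B n) = \<rho> + ?c *\<^sub>R (K ** \<rho>) + ?c *\<^sub>R (\<rho> ** adj K) + ?c^2 *\<^sub>R (K ** \<rho> ** adj K)"
      unfolding adjB by (simp add: B_def mm_add_left mm_add_right mm_scaleR_left mm_scaleR_right
          matrix_mul_assoc power2_eq_square algebra_simps)
    then show "app (A n) \<rho> = app (1 + (1 / real n) *\<^sub>R Z + (1 / real n)^2 *\<^sub>R cK) \<rho>"
      by (simp add: appA appZ appcK f_def lindblad_decomp K_def[symmetric] Kad[symmetric] algebra_simps)
  qed
  have bnd: "norm (A n - (1 + (1 / real n) *\<^sub>R Z)) \<le> norm cK / (real n)^2" if "n \<ge> 1" for n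
    by (simp add: Aeq power_divide)
  have lim: "(\<lambda>n. A n ^ n) \<longlonglongrightarrow> exp Z"
    by (rule approx_exp_limit[OF norm_ge_zero bnd])
  have cpn: "completely_positive (app (A n ^ n))" for n
  proof -
    have "app (A n ^ n) = f n ^^ n" by (rule ext) (simp add: app_power_funpow appA)
    then show ?thesis using cp_funpow[OF cpf] by simp
  qed
  show ?thesis unfolding Z_def[symmetric]
    by (rule cp_limit[OF cpn]) (rule app.tendsto[OF lim tendsto_const])
qed

lemma exp_trace_preserving:
  fixes Z :: "'d::finite cmat op"
  assumes tr: "\<And>\<rho>. trace (app Z \<rho>) = 0"
  shows "trace (app (exp Z) \<rho>) = trace \<rho>"
proof -
  have s: "(\<lambda>n. Z ^ n /\<^sub>R fact n) sums exp Z"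
    unfolding exp_def by (rule summable_sums[OF summable_exp_generic])
  have s2: "(\<lambda>n. app (Z ^ n /\<^sub>R fact n) \<rho>) sums app (exp Z) \<rho>"
    by (rule bounded_linear.sums[OF app.bounded_linear_left s])
  have bt: "bounded_linear (trace :: 'd cmat \<Rightarrow> complex)"
    using linear_trace linear_conv_bounded_linear by blast
  have s3: "(\<lambda>n. trace (app (Z ^ n /\<^sub>R fact n) \<rho>)) sums trace (app (exp Z) \<rho>)"
    by (rule bounded_linear.sums[OF bt s2])
  have eq: "(\<lambda>n. trace (app (Z ^ n /\<^sub>R fact n) \<rho>)) = (\<lambda>n. if n = 0 then trace \<rho> else 0)"
  proof
    fix n
    show "trace (app (Z ^ n /\<^sub>R fact n) \<rho>) = (if n = 0 then trace \<rho> else 0)"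
    proof (cases n)
      case (Suc m)
      have "app (Z ^ n) \<rho> = app Z (app (Z ^ m) \<rho>)" by (simp add: Suc)
      then show ?thesis using Suc by (simp add: trace_scaleR tr)
    qed simp
  qed
  have "(\<lambda>n. if n = 0 then trace \<rho> else 0) sums trace \<rho>"
    by (rule sums_single)
  then show ?thesis using s3 eq sums_unique2 by metis
qed


lemma norm_app_basis: "norm (X::'a::euclidean_space op) \<le> (\<Sum>b\<in>Basis. norm (app X b))"
  unfolding norm_op_opb app_def by (rule norm_blinfun_euclidean_le)

lemma op_deriv_basis:
  fixes Y :: "real \<Rightarrow> 'a::euclidean_space op"
  assumes d: "\<And>b. b \<in> Basis \<Longrightarrow> ((\<lambda>s. app (Y s) b) has_vector_derivative app Y' b) (at t within S)"
  shows "(Y has_vector_derivative Y') (at t within S)"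
  unfolding has_vector_derivative_def has_derivative_within
proof (intro conjI)
  show "bounded_linear (\<lambda>x. x *\<^sub>R Y')" by (rule bounded_linear_scaleR_left)
  have lb: "((\<lambda>s. (1 / norm (s - t)) *\<^sub>R (app (Y s) b - (app (Y t) b + (s - t) *\<^sub>R app Y' b))) \<longlongrightarrow> 0) (at t within S)"
    if "b \<in> Basis" for b
    using d[OF that] unfolding has_vector_derivative_def has_derivative_within by blast
  have g: "((\<lambda>s. \<Sum>b\<in>Basis. norm ((1 / norm (s - t)) *\<^sub>R (app (Y s) b - (app (Y t) b + (s - t) *\<^sub>R app Y' b)))) \<longlongrightarrow> 0) (at t within S)"
    using tendsto_sum[OF tendsto_norm_zero[OF lb]] by simp
  show "((\<lambda>s. (1 / norm (s - t)) *\<^sub>R (Y s - (Y t + (s - t) *\<^sub>R Y'))) \<longlongrightarrow> 0) (at t within S)"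
  proof (rule Lim_null_comparison[OF _ g], rule always_eventually, rule allI)
    fix s
    have "norm ((1 / norm (s - t)) *\<^sub>R (Y s - (Y t + (s - t) *\<^sub>R Y')))
        \<le> (\<Sum>b\<in>Basis. norm (app ((1 / norm (s - t)) *\<^sub>R (Y s - (Y t + (s - t) *\<^sub>R Y'))) b))"
      by (rule norm_app_basis)
    then show "norm ((1 / norm (s - t)) *\<^sub>R (Y s - (Y t + (s - t) *\<^sub>R Y')))
        \<le> (\<Sum>b\<in>Basis. norm ((1 / norm (s - t)) *\<^sub>R (app (Y s) b - (app (Y t) b + (s - t) *\<^sub>R app Y' b))))"
      by simp
  qed
qed

context
  fixes L :: "real \<Rightarrow> 'd::finite superop" and F :: "nat \<Rightarrow> 'd cmat"
  assumes lin: "\<forall>t\<ge>0. complex_linear_map (L t)"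
    and tr: "\<forall>t\<ge>0. \<forall>X. trace (L t X) = 0"
    and cont: "\<forall>\<rho>. continuous_on {0..} (\<lambda>t. L t \<rho>)"
    and comm: "commutative_family L"
    and gk: "\<forall>t\<ge>0. GKSL_form F (Zint L t)"
begin

lemma linL: "t \<ge> 0 \<Longrightarrow> linear (L t)"
  using lin complex_linear_imp_linear by blast

lemma intg: "(\<lambda>\<tau>. L \<tau> \<rho>) integrable_on {0..s}"
  by (rule integrable_continuous_real, rule continuous_on_subset[OF cont[rule_format]]) auto

lemma linZ: "linear (Zint L s)"
proof (rule linearI)
  fix x y and r :: real
  have "Zint L s (x + y) = integral {0..s} (\<lambda>\<tau>. L \<tau> x + L \<tau> y)"
    unfolding Zint_def by (rule integral_cong) (simp add: linear_add[OF linL])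
  also have "\<dots> = Zint L s x + Zint L s y" unfolding Zint_def by (rule integral_add[OF intg intg])
  finally show "Zint L s (x + y) = Zint L s x + Zint L s y" .
  have "Zint L s (r *\<^sub>R x) = integral {0..s} (\<lambda>\<tau>. r *\<^sub>R L \<tau> x)"
    unfolding Zint_def by (rule integral_cong) (simp add: linear_scale[OF linL])
  then show "Zint L s (r *\<^sub>R x) = r *\<^sub>R Zint L s x" by (simp add: Zint_def)
qed

definition "Lop t = mkop (L t)"
definition "Zop s = mkop (Zint L s)"

lemma appL: "t \<ge> 0 \<Longrightarrow> app (Lop t) = L t"
  unfolding Lop_def by (rule app_mkop_linear[OF linL])

lemma appZ: "app (Zop s) = Zint L s"
  unfolding Zop_def by (rule app_mkop_linear[OF linZ])

lemma commLZ: "a \<ge> 0 \<Longrightarrow> Zint L s (L a \<rho>) = L a (Zint L s \<rho>)"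
proof -
  assume a: "a \<ge> 0"
  have "Zint L s (L a \<rho>) = integral {0..s} (L a \<circ> (\<lambda>\<tau>. L \<tau> \<rho>))"
    unfolding Zint_def
  proof (rule integral_cong)
    fix \<tau> assume "\<tau> \<in> {0..s}"
    then have "\<tau> \<ge> 0" by simp
    then have "L \<tau> \<circ> L a = L a \<circ> L \<tau>" using comm a by (simp add: commutative_family_def)
    then show "L \<tau> (L a \<rho>) = (L a \<circ> (\<lambda>\<tau>. L \<tau> \<rho>)) \<tau>" by (metis comp_apply)
  qed
  also have "\<dots> = L a (Zint L s \<rho>)"
    unfolding Zint_def by (rule integral_linear[OF intg]) (simp add: linL[OF a] linear_conv_bounded_linear[symmetric])
  finally show ?thesis .
qed

lemma commZZ: "Zint L s (Zint L t \<rho>) = Zint L t (Zint L s \<rho>)"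
proof -
  have "Zint L s (Zint L t \<rho>) = integral {0..s} (Zint L t \<circ> (\<lambda>\<tau>. L \<tau> \<rho>))"
    unfolding Zint_def[of L s]
    by (rule integral_cong) (simp add: commLZ)
  also have "\<dots> = Zint L t (Zint L s \<rho>)"
    unfolding Zint_def[of L s]
    by (rule integral_linear[OF intg]) (simp add: linZ linear_conv_bounded_linear[symmetric])
  finally show ?thesis .
qed

lemma Zop_comm: "Zop s * Zop t = Zop t * Zop s"
  by (rule app_eqI) (simp add: appZ commZZ)

lemma Lop_Zop_comm: "t \<ge> 0 \<Longrightarrow> Zop s * Lop t = Lop t * Zop s"
  by (rule app_eqI) (simp add: appZ appL commLZ)

lemma Zderiv_pt:
  assumes t: "t \<ge> 0"
  shows "((\<lambda>s. Zint L s \<rho>) has_vector_derivative L t \<rho>) (at t within {0..})"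
proof -
  have d: "((\<lambda>u. integral {0..u} (\<lambda>\<tau>. L \<tau> \<rho>)) has_vector_derivative L t \<rho>) (at t within {0..t+1})"
    by (rule integral_has_vector_derivative, rule continuous_on_subset[OF cont[rule_format]]) (use t in auto)
  have e: "at t within {0..} = at t within {0..t+1}"
    by (rule at_within_nhd[where S="{t - 1 <..< t + 1}"]) auto
  show ?thesis using d e by (simp add: Zint_def)
qed

lemma Zop_deriv: "t \<ge> 0 \<Longrightarrow> (Zop has_vector_derivative Lop t) (at t within {0..})"
  by (rule op_deriv_basis) (simp add: appZ appL Zderiv_pt)

lemma expZ_deriv:
  "t \<ge> 0 \<Longrightarrow> ((\<lambda>s. exp (Zop s)) has_vector_derivative exp (Zop t) * Lop t) (at t within {0..})"
  by (rule exp_path_deriv[OF Zop_deriv]) (simp_all add: Zop_comm)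

lemma expZ_comm: "t \<ge> 0 \<Longrightarrow> exp (Zop t) * Lop t = Lop t * exp (Zop t)"
  using mult_exp_commute[of "Zop t" "Lop t"] Lop_Zop_comm by simp

lemma superop_exp_Zop: "superop_exp (Zint L s) = app (exp (Zop s))"
  by (rule ext) (simp add: superop_exp_def app_exp appZ)

lemma Zop0: "Zop 0 = 0"
  by (rule app_eqI) (simp add: appZ Zint_def)

lemma exists_sol: "solves_master L (\<lambda>s. superop_exp (Zint L s))"
  unfolding solves_master_def superop_exp_Zop
proof (intro conjI allI impI)
  show "app (exp (Zop 0)) = id" by (rule ext) (simp add: Zop0)
next
  fix t :: real and \<rho> assume t: "0 \<le> t"
  have "((\<lambda>s. app (exp (Zop s)) \<rho>) has_vector_derivative (app (exp (Zop t)) 0 + app (exp (Zop t) * Lop t) \<rho>)) (at t within {0..})"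
    by (rule app.has_vector_derivative[OF expZ_deriv[OF t] has_vector_derivative_const])
  moreover have "app (exp (Zop t)) 0 + app (exp (Zop t) * Lop t) \<rho> = L t (app (exp (Zop t)) \<rho>)"
    by (simp only: expZ_comm[OF t] app_mult appL[OF t] app.zero_right) simp
  ultimately show "((\<lambda>s. app (exp (Zop s)) \<rho>) has_vector_derivative L t (app (exp (Zop t)) \<rho>)) (at t within {0..})"
    by simp
qed

lemma unique_sol:
  assumes S: "solves_master L \<Lambda>" and t: "t \<ge> 0"
  shows "\<Lambda> t = superop_exp (Zint L t)"
proof (rule ext)
  fix \<rho>
  define y where "y s = app (exp (- Zop s)) (\<Lambda> s \<rho>)" for s
  have dy: "(y has_vector_derivative 0) (at s within {0..})" if s: "s \<in> {0..}" for s
  proof -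
    have s0: "s \<ge> 0" using s by simp
    have dn: "((\<lambda>u. - Zop u) has_vector_derivative - Lop s) (at s within {0..})"
      by (rule has_vector_derivative_minus[OF Zop_deriv[OF s0]])
    have de: "((\<lambda>u. exp (- Zop u)) has_vector_derivative exp (- Zop s) * - Lop s) (at s within {0..})"
      by (rule exp_path_deriv[OF dn]) (simp_all add: Zop_comm s0)
    have dx: "((\<lambda>u. \<Lambda> u \<rho>) has_vector_derivative L s (\<Lambda> s \<rho>)) (at s within {0..})"
      using S s0 unfolding solves_master_def by blast
    have "(y has_vector_derivative (app (exp (- Zop s)) (L s (\<Lambda> s \<rho>)) + app (exp (- Zop s) * - Lop s) (\<Lambda> s \<rho>))) (at s within {0..})"
      unfolding y_def by (rule app.has_vector_derivative[OF de dx])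
    moreover have "app (exp (- Zop s)) (L s (\<Lambda> s \<rho>)) + app (exp (- Zop s) * - Lop s) (\<Lambda> s \<rho>) = 0"
      by (simp add: appL[OF s0] app.minus_right)
    ultimately show ?thesis by simp
  qed
  obtain c where c: "\<And>s. s \<in> {0..} \<Longrightarrow> y s = c"
    using has_vector_derivative_zero_constant[OF convex_real_interval(1) dy] by blast
  have "y 0 = \<rho>" using S by (simp add: y_def Zop0 solves_master_def)
  then have yt: "y t = \<rho>" using c[of 0] c[of t] t by simp
  have "\<Lambda> t \<rho> = app (exp (Zop t) * exp (- Zop t)) (\<Lambda> t \<rho>)" by (simp add: exp_minus_inverse)
  also have "\<dots> = app (exp (Zop t)) \<rho>" using yt by (simp add: y_def)
  finally show "\<Lambda> t \<rho> = superop_exp (Zint L t) \<rho>" by (simp add: superop_exp_Zop)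
qed

lemma cptp_sol:
  assumes t: "t \<ge> 0"
  shows "CPTP (superop_exp (Zint L t))"
proof -
  obtain H D where H: "hermitian H" and P: "psd_coeff (CARD('d)^2 - 1) D"
    and Z: "Zint L t = lindblad_map F H D"
    using gk t unfolding GKSL_form_def by blast
  have Zt: "Zop t = mkop (lindblad_map F H D)" by (simp add: Zop_def Z)
  have cp: "completely_positive (superop_exp (Zint L t))"
    unfolding superop_exp_Zop Zt by (rule exp_lindblad_cp[OF P H])
  have trZ: "trace (app (Zop t) \<rho>) = 0" for \<rho>
  proof -
    have bt: "bounded_linear (trace :: 'd cmat \<Rightarrow> complex)"
      using linear_trace linear_conv_bounded_linear by blast
    have "trace (app (Zop t) \<rho>) = trace (integral {0..t} (\<lambda>\<tau>. L \<tau> \<rho>))" by (simp add: appZ Zint_def)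
    also have "\<dots> = integral {0..t} (trace \<circ> (\<lambda>\<tau>. L \<tau> \<rho>))"
      by (rule integral_linear[OF intg bt, symmetric])
    also have "\<dots> = integral {0..t} (\<lambda>\<tau>. 0)"
      by (rule integral_cong) (use tr in auto)
    finally show ?thesis by simp
  qed
  have tp: "trace_preserving (superop_exp (Zint L t))"
    unfolding trace_preserving_def superop_exp_Zop using exp_trace_preserving[OF trZ] by blast
  show ?thesis using cp tp by (simp add: CPTP_def)
qed

theorem main_phys:
  "(\<exists>\<Lambda>. solves_master L \<Lambda>) \<and> (\<forall>\<Lambda>. solves_master L \<Lambda> \<longrightarrow> (\<forall>t\<ge>0. \<Lambda> t = superop_exp (Zint L t) \<and> CPTP (\<Lambda> t)))"
  using exists_sol unique_sol cptp_sol by metis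

end


lemma csmult_of_real_mult: "csmult (complex_of_real a * d) X = a *\<^sub>R csmult d X"
  by (simp add: csmult_def vec_eq_iff) (simp add: scaleR_conv_of_real mult.assoc)

lemma lindblad_lin:
  fixes F :: "nat \<Rightarrow> 'd::finite cmat"
  shows "lindblad_map F (a *\<^sub>R H1 + b *\<^sub>R H2) (\<lambda>i j. complex_of_real a * D1 i j + complex_of_real b * D2 i j) \<rho>
    = a *\<^sub>R lindblad_map F H1 D1 \<rho> + b *\<^sub>R lindblad_map F H2 D2 \<rho>"
proof -
  let ?I = "{1..CARD('d)^2 - 1}"
  define M where "M i j = F i ** \<rho> ** adj (F j) - csmult (1/2) (adj (F j) ** F i ** \<rho> + \<rho> ** (adj (F j) ** F i))" for i j
  have e: "lindblad_map F H D \<rho> = csmult (- \<i>) (H ** \<rho> - \<rho> ** H) + (\<Sum>i\<in>?I. \<Sum>j\<in>?I. csmult (D i j) (M i j))" for H D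
    by (simp add: lindblad_map_def M_def)
  have s: "(\<Sum>i\<in>?I. \<Sum>j\<in>?I. csmult (complex_of_real a * D1 i j + complex_of_real b * D2 i j) (M i j))
     = a *\<^sub>R (\<Sum>i\<in>?I. \<Sum>j\<in>?I. csmult (D1 i j) (M i j)) + b *\<^sub>R (\<Sum>i\<in>?I. \<Sum>j\<in>?I. csmult (D2 i j) (M i j))"
    by (simp add: csmult_add_left csmult_of_real_mult sum.distrib scaleR_sum_right)
  have c: "csmult (- \<i>) ((a *\<^sub>R H1 + b *\<^sub>R H2) ** \<rho> - \<rho> ** (a *\<^sub>R H1 + b *\<^sub>R H2))
     = a *\<^sub>R csmult (- \<i>) (H1 ** \<rho> - \<rho> ** H1) + b *\<^sub>R csmult (- \<i>) (H2 ** \<rho> - \<rho> ** H2)"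
    by (simp add: mm_add_left mm_add_right mm_scaleR_left mm_scaleR_right csmult_add_right
        csmult_diff_right csmult_scaleR algebra_simps)
  show ?thesis unfolding e s c by (simp add: algebra_simps)
qed

lemma GKSL_comb:
  fixes F :: "nat \<Rightarrow> 'd::finite cmat"
  assumes g1: "GKSL_form F Z1" and g2: "GKSL_form F Z2" and a: "a \<ge> 0" and b: "b \<ge> 0"
  shows "GKSL_form F (\<lambda>\<rho>. a *\<^sub>R Z1 \<rho> + b *\<^sub>R Z2 \<rho>)"
proof -
  obtain H1 D1 where h1: "hermitian H1" and p1: "psd_coeff (CARD('d)^2 - 1) D1" and z1: "Z1 = lindblad_map F H1 D1"
    using g1 unfolding GKSL_form_def by blast
  obtain H2 D2 where h2: "hermitian H2" and p2: "psd_coeff (CARD('d)^2 - 1) D2" and z2: "Z2 = lindblad_map F H2 D2"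
    using g2 unfolding GKSL_form_def by blast
  let ?H = "a *\<^sub>R H1 + b *\<^sub>R H2"
  let ?D = "\<lambda>i j. complex_of_real a * D1 i j + complex_of_real b * D2 i j"
  have h: "hermitian ?H" using h1 h2 by (simp add: hermitian_def adj_add adj_scaleR)
  have p: "psd_coeff (CARD('d)^2 - 1) ?D"
    unfolding psd_coeff_psdS psdS_qf
  proof
    fix v
    let ?I = "{1..CARD('d)^2 - 1}"
    have q: "qf ?I ?D v = complex_of_real a * qf ?I D1 v + complex_of_real b * qf ?I D2 v"
      by (simp add: qf_def algebra_simps sum.distrib sum_distrib_left)
    have q1: "Im (qf ?I D1 v) = 0 \<and> 0 \<le> Re (qf ?I D1 v)" using p1 unfolding psd_coeff_psdS psdS_qf by blast
    have q2: "Im (qf ?I D2 v) = 0 \<and> 0 \<le> Re (qf ?I D2 v)" using p2 unfolding psd_coeff_psdS psdS_qf by blast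
    show "Im (qf ?I ?D v) = 0 \<and> 0 \<le> Re (qf ?I ?D v)"
      unfolding q using q1 q2 a b by simp
  qed
  have "(\<lambda>\<rho>. a *\<^sub>R Z1 \<rho> + b *\<^sub>R Z2 \<rho>) = lindblad_map F ?H ?D"
    by (rule ext) (simp add: z1 z2 lindblad_lin)
  then show ?thesis unfolding GKSL_form_def using h p by blast
qed

theorem lemma2:
  fixes F :: "nat \<Rightarrow> complex^'d::finite^'d"
    and L1 L2 :: "real \<Rightarrow> 'd superop"
  assumes basis: "op_basis F"
    and gen1: "\<forall>t\<ge>0. dyn_gen (L1 t)"
    and gen2: "\<forall>t\<ge>0. dyn_gen (L2 t)"
    and cont1: "\<forall>\<rho>. continuous_on {0..} (\<lambda>t. L1 t \<rho>)"
    and cont2: "\<forall>\<rho>. continuous_on {0..} (\<lambda>t. L2 t \<rho>)"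
    and ssc1: "SSC F L1"
    and ssc2: "SSC F L2"
    and comm: "\<forall>\<alpha>\<ge>0. \<forall>\<beta>\<ge>0. commutative_family (lin_comb \<alpha> L1 \<beta> L2)"
  shows "additive L1 L2 \<and>
    (\<forall>\<alpha>\<ge>0. \<forall>\<beta>\<ge>0.
       SSC F (lin_comb \<alpha> L1 \<beta> L2) \<and>
       (\<forall>\<Lambda>. solves_master (lin_comb \<alpha> L1 \<beta> L2) \<Lambda> \<longrightarrow>
          (\<forall>t\<ge>0. \<Lambda> t = superop_exp (Zint (lin_comb \<alpha> L1 \<beta> L2) t) \<and>
                  CPTP (\<Lambda> t))))"
proof -
  have key: "SSC F (lin_comb \<alpha> L1 \<beta> L2) \<and>
      (\<exists>\<Lambda>. solves_master (lin_comb \<alpha> L1 \<beta> L2) \<Lambda>) \<and>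
      (\<forall>\<Lambda>. solves_master (lin_comb \<alpha> L1 \<beta> L2) \<Lambda> \<longrightarrow>
          (\<forall>t\<ge>0. \<Lambda> t = superop_exp (Zint (lin_comb \<alpha> L1 \<beta> L2) t) \<and> CPTP (\<Lambda> t)))"
    if a: "\<alpha> \<ge> 0" and b: "\<beta> \<ge> 0" for \<alpha> \<beta>
  proof -
    let ?L = "lin_comb \<alpha> L1 \<beta> L2"
    have lin: "\<forall>t\<ge>0. complex_linear_map (?L t)"
    proof (intro allI impI)
      fix t :: real assume t: "t \<ge> 0"
      have c1: "complex_linear_map (L1 t)" and c2: "complex_linear_map (L2 t)"
        using gen1 gen2 t by (auto simp: dyn_gen_def)
      show "complex_linear_map (?L t)"
        using c1 c2 unfolding complex_linear_map_def lin_comb_def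
        by (simp add: csmult_add_right csmult_scaleR algebra_simps)
    qed
    have tr: "\<forall>t\<ge>0. \<forall>X. trace (?L t X) = 0"
      using gen1 gen2 by (simp add: dyn_gen_def lin_comb_def trace_add trace_scaleR)
    have cont: "\<forall>\<rho>. continuous_on {0..} (\<lambda>t. ?L t \<rho>)"
      using cont1 cont2 unfolding lin_comb_def by (auto intro!: continuous_intros)
    have cm: "commutative_family ?L" using comm a b by blast
    have i1: "(\<lambda>\<tau>. L1 \<tau> \<rho>) integrable_on {0..t}" for \<rho> t
      by (rule integrable_continuous_real, rule continuous_on_subset[OF cont1[rule_format]]) auto
    have i2: "(\<lambda>\<tau>. L2 \<tau> \<rho>) integrable_on {0..t}" for \<rho> t
      by (rule integrable_continuous_real, rule continuous_on_subset[OF cont2[rule_format]]) auto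
    have zeq: "Zint ?L t = (\<lambda>\<rho>. \<alpha> *\<^sub>R Zint L1 t \<rho> + \<beta> *\<^sub>R Zint L2 t \<rho>)" for t
    proof
      fix \<rho>
      show "Zint ?L t \<rho> = \<alpha> *\<^sub>R Zint L1 t \<rho> + \<beta> *\<^sub>R Zint L2 t \<rho>"
        unfolding Zint_def lin_comb_def
        by (subst integral_add) (auto intro!: integrable_cmul i1 i2)
    qed
    have gk: "\<forall>t\<ge>0. GKSL_form F (Zint ?L t)"
    proof (intro allI impI)
      fix t :: real assume t: "t \<ge> 0"
      have "GKSL_form F (Zint L1 t)" "GKSL_form F (Zint L2 t)"
        using ssc1 ssc2 t by (auto simp: SSC_def semigroup_simulable_def)
      then show "GKSL_form F (Zint ?L t)" unfolding zeq by (rule GKSL_comb[OF _ _ a b])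
    qed
    have ssc: "SSC F ?L" using cm gk by (simp add: SSC_def semigroup_simulable_def)
    show ?thesis using ssc main_phys[OF lin tr cont cm gk] by blast
  qed
  show ?thesis
    unfolding additive_def physical_def using key by blast
qed


end
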